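(* For all $i,j\in\{1,\dots,n\}$ the following relations hold in $(\mathcal{A}'/\mathrm{II},\diamond)$ (with summation over the repeated index $i$ in the last three): \begin{align*} \overline{\partial_i}\diamond\overline{\gamma^j}-\overline{\gamma^j}\diamond\overline{\partial_i}&=\tfrac1H\,\overline{\gamma_i}\diamond\overline{\partial^j},\\ \overline{\gamma^i}\diamond\overline{\gamma^j}+\overline{\gamma^j}\diamond\overline{\gamma^i}&=2\eta^{ij}\overline1+\tfrac{2}{H+1}\big(\overline{x^j}\diamond\overline{\partial^i}+\overline{x^i}\diamond\overline{\partial^j}\big),\\ \overline{\partial_i}\diamond\overline{x^j}-\overline{x^j}\diamond\overline{\partial_i}&=\delta_i^j\overline1+\tfrac1{2H}\,\overline{\gamma_i}\diamond\overline{\gamma^j}+\tfrac1{H+1}\,\overline{x_i}\diamond\overline{\partial^j},\\ \overline{\gamma^i}\diamond\overline{x^j}-\overline{x^j}\diamond\overline{\gamma^i}&=\tfrac1{H+1}\,\overline{x^i}\diamond\overline{\gamma^j},\\ \overline{x^i}\diamond\overline{\partial_i}&=\big(-\tfrac n2-H\big)\overline1,\\ \overline{\gamma^i}\diamond\overline{\partial_i}&=0,\\ \overline{\gamma_i}\diamond\overline{x^i}&=0. \end{align*}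
   Context: Fix $n\ge1$ and an invertible complex matrix $\eta=(\eta^{ij})$ with $\eta^{ij}=\eta^{ji}$ and inverse $(\eta_{ij})$. $\mathcal{A}=W(2n|n)$ is the associative superalgebra generated by even $x^1,\dots,x^n,\partial_1,\dots,\partial_n$ and odd $\gamma^1,\dots,\gamma^n$ with relations $x^ix^j=x^jx^i$, $\partial_i\partial_j=\partial_j\partial_i$, $\partial_ix^j-x^j\partial_i=\delta_i^j$, $\gamma^i$ commuting with all $x^j,\partial_j$, $\gamma^i\gamma^j+\gamma^j\gamma^i=2\eta^{ij}$. Repeated indices are summed; $x_i=\eta_{ij}x^j$, $\partial^i=\eta^{ij}\partial_j$, $\gamma_i=\eta_{ij}\gamma^j$. Set $X=\frac{\sqrt{-1}}{\sqrt2}\gamma^i\partial_i$, $Y=\frac{\sqrt{-1}}{\sqrt2}\gamma^ix_i$, $H=-\frac12(\partial_ix^i+x^i\partial_i)$, $E=-\frac12\partial^i\partial_i$, $F=\frac12x^ix_i$. Let $\mathcal{A}'$ be the localization of $\mathcal{A}$ at the multiplicative set generated by $\{H+k:k\in\mathbb{Z}\}$, $\mathrm{II}:=Y\mathcal{A}'+F\mathcal{A}'+\mathcal{A}'X+\mathcal{A}'E$, and $\overline a:=a+\mathrm{II}$. Define $\kappa_k(t)=-k/2$ for $k$ even, $\kappa_k(t)=t+\frac{k+1}2$ for $k$ odd, $\varphi_k(t)=\prod_{l=1}^k\frac{(-1)^l}{\kappa_l(t)}$. The diamond product is $\overline a\diamond\overline b:=\sum_{k\ge0}a\varphi_k(H)Y^kX^kb+\mathrm{II}$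 (all but finitely many terms lie in $\mathrm{II}$); it is associative. For a rational function $\phi$ with $\phi(H)\in\mathcal{A}'$ one writes $\phi(H)\,\overline a:=\overline{\phi(H)a}$ $(=\overline{\phi(H)}\diamond\overline a)$, e.g. $\frac1H\overline{a}=\overline{H^{-1}a}$. *)

theory Defs
  imports Complex_Main
begin

text \<open>Generators: Xg i = x^i, Dg i = \<partial>_i, Gg i = \<gamma>^i, indices i in {1..n}.\<close>
datatype gen = Xg nat | Dg nat | Gg nat

fun valid_gen :: "nat \<Rightarrow> gen \<Rightarrow> bool" where
  "valid_gen n (Xg i) = (1 \<le> i \<and> i \<le> n)"
| "valid_gen n (Dg i) = (1 \<le> i \<and> i \<le> n)"
| "valid_gen n (Gg i) = (1 \<le> i \<and> i \<le> n)"

text \<open>Elements of the free associative C-algebra: finitely supported coefficient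
  functions on words in the valid generators.\<close>
type_synonym fa = "gen list \<Rightarrow> complex"

definition fin_fa :: "nat \<Rightarrow> fa \<Rightarrow> bool" where
  "fin_fa n f \<longleftrightarrow> finite {w. f w \<noteq> 0} \<and> (\<forall>w. f w \<noteq> 0 \<longrightarrow> list_all (valid_gen n) w)"

definition fone :: fa where "fone = (\<lambda>w. if w = [] then 1 else 0)"
definition fzero :: fa where "fzero = (\<lambda>w. 0)"
definition fadd :: "fa \<Rightarrow> fa \<Rightarrow> fa" where "fadd f h = (\<lambda>w. f w + h w)"
definition fsmul :: "complex \<Rightarrow> fa \<Rightarrow> fa" where "fsmul c f = (\<lambda>w. c * f w)"
definition fmul :: "fa \<Rightarrow> fa \<Rightarrow> fa" where
  "fmul f h = (\<lambda>w. \<Sum>k\<le>length w. f (take k w) * h (drop k w))"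
definition fgen :: "gen \<Rightarrow> fa" where "fgen a = (\<lambda>w. if w = [a] then 1 else 0)"

definition rels :: "nat \<Rightarrow> (nat \<Rightarrow> nat \<Rightarrow> complex) \<Rightarrow> fa set" where
  "rels n eta = (\<Union>i\<in>{1..n}. \<Union>j\<in>{1..n}.
     { fadd (fmul (fgen (Xg i)) (fgen (Xg j))) (fsmul (-1) (fmul (fgen (Xg j)) (fgen (Xg i)))),
       fadd (fmul (fgen (Dg i)) (fgen (Dg j))) (fsmul (-1) (fmul (fgen (Dg j)) (fgen (Dg i)))),
       fadd (fadd (fmul (fgen (Dg i)) (fgen (Xg j))) (fsmul (-1) (fmul (fgen (Xg j)) (fgen (Dg i)))))
            (fsmul (- (if i = j then 1 else 0)) fone),
       fadd (fmul (fgen (Gg i)) (fgen (Xg j))) (fsmul (-1) (fmul (fgen (Xg j)) (fgen (Gg i)))),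
       fadd (fmul (fgen (Gg i)) (fgen (Dg j))) (fsmul (-1) (fmul (fgen (Dg j)) (fgen (Gg i)))),
       fadd (fadd (fmul (fgen (Gg i)) (fgen (Gg j))) (fmul (fgen (Gg j)) (fgen (Gg i))))
            (fsmul (- 2 * eta i j) fone) })"

inductive_set ideal_gen :: "nat \<Rightarrow> fa set \<Rightarrow> fa set" for n :: nat and R :: "fa set" where
  base: "r \<in> R \<Longrightarrow> r \<in> ideal_gen n R"
| zero: "fzero \<in> ideal_gen n R"
| add: "a \<in> ideal_gen n R \<Longrightarrow> b \<in> ideal_gen n R \<Longrightarrow> fadd a b \<in> ideal_gen n R"
| lmul: "a \<in> ideal_gen n R \<Longrightarrow> fin_fa n f \<Longrightarrow> fmul f a \<in> ideal_gen n R"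
| rmul: "a \<in> ideal_gen n R \<Longrightarrow> fin_fa n f \<Longrightarrow> fmul a f \<in> ideal_gen n R"

definition H_fa :: "nat \<Rightarrow> fa" where
  "H_fa n = fsmul (-1/2) (\<lambda>w. \<Sum>i\<in>{1..n}.
      fadd (fmul (fgen (Dg i)) (fgen (Xg i))) (fmul (fgen (Xg i)) (fgen (Dg i))) w)"

definition S_fa :: "nat \<Rightarrow> fa set" where
  "S_fa n = {foldr (\<lambda>k acc. fmul (fadd (H_fa n) (fsmul (of_int k) fone)) acc) ks fone | ks. True}"

definition is_unit_r :: "'r::ring_1 \<Rightarrow> bool" where
  "is_unit_r x \<longleftrightarrow> (\<exists>t. x * t = 1 \<and> t * x = 1)"

definition rinv :: "'r::ring_1 \<Rightarrow> 'r" where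
  "rinv x = (SOME t. x * t = 1 \<and> t * x = 1)"

definition ev :: "(complex \<Rightarrow> 'r::ring_1) \<Rightarrow> (gen \<Rightarrow> 'r) \<Rightarrow> fa \<Rightarrow> 'r" where
  "ev e g f = (\<Sum>w\<in>{w. f w \<noteq> 0}. e (f w) * prod_list (map g w))"

text \<open>(e, g) presents 'r as the (right Ore) localization A' of A = W(2n|n) = F/I at the
  multiplicative set generated by the H + k: the induced map A \<rightarrow> 'r is a C-algebra map,
  sends S to units, every element is a right fraction a s^{-1}, and its kernel is
  {a | a s = 0 for some s in S} (standard definition of a ring of right fractions).\<close>
definition is_localization :: "nat \<Rightarrow> (nat \<Rightarrow> nat \<Rightarrow> complex) \<Rightarrow> (complex \<Rightarrow> 'r::ring_1)
    \<Rightarrow> (gen \<Rightarrow> 'r) \<Rightarrow> bool" where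
  "is_localization n eta e g \<longleftrightarrow>
     (\<forall>a b. e (a + b) = e a + e b) \<and> (\<forall>a b. e (a * b) = e a * e b) \<and> e 1 = 1 \<and>
     (\<forall>c r. e c * r = r * e c) \<and>
     (\<forall>s\<in>S_fa n. is_unit_r (ev e g s)) \<and>
     (\<forall>r. \<exists>f s. fin_fa n f \<and> s \<in> S_fa n \<and> r = ev e g f * rinv (ev e g s)) \<and>
     (\<forall>f. fin_fa n f \<longrightarrow>
        (ev e g f = 0 \<longleftrightarrow> (\<exists>s\<in>S_fa n. fmul f s \<in> ideal_gen n (rels n eta))))"

context
  fixes n :: nat and eta etainv :: "nat \<Rightarrow> nat \<Rightarrow> complex"
    and e :: "complex \<Rightarrow> 'r::ring_1" and g :: "gen \<Rightarrow> 'r"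
begin

definition xup :: "nat \<Rightarrow> 'r" where "xup i = g (Xg i)"
definition dlow :: "nat \<Rightarrow> 'r" where "dlow i = g (Dg i)"
definition gup :: "nat \<Rightarrow> 'r" where "gup i = g (Gg i)"
definition xlow :: "nat \<Rightarrow> 'r" where "xlow i = (\<Sum>j\<in>{1..n}. e (etainv i j) * xup j)"
definition dup :: "nat \<Rightarrow> 'r" where "dup i = (\<Sum>j\<in>{1..n}. e (eta i j) * dlow j)"
definition glow :: "nat \<Rightarrow> 'r" where "glow i = (\<Sum>j\<in>{1..n}. e (etainv i j) * gup j)"

definition Xo :: 'r where
  "Xo = e (\<i> / complex_of_real (sqrt 2)) * (\<Sum>i\<in>{1..n}. gup i * dlow i)"
definition Yo :: 'r where
  "Yo = e (\<i> / complex_of_real (sqrt 2)) * (\<Sum>i\<in>{1..n}. gup i * xlow i)"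
definition Ho :: 'r where
  "Ho = e (-1/2) * (\<Sum>i\<in>{1..n}. dlow i * xup i + xup i * dlow i)"
definition Eo :: 'r where
  "Eo = e (-1/2) * (\<Sum>i\<in>{1..n}. dup i * dlow i)"
definition Fo :: 'r where
  "Fo = e (1/2) * (\<Sum>i\<in>{1..n}. xup i * xlow i)"

definition II :: "'r set" where
  "II = {Yo * a + Fo * b + c * Xo + d * Eo | a b c d. True}"

definition kappa :: "nat \<Rightarrow> 'r" where
  "kappa l = (if even l then e (- of_nat l / 2) else Ho + e (of_nat (l + 1) / 2))"

definition phi :: "nat \<Rightarrow> 'r" where
  "phi k = prod_list (map (\<lambda>l. e ((-1) ^ l) * rinv (kappa l)) [1..<Suc k])"

definition dterm :: "'r \<Rightarrow> 'r \<Rightarrow> nat \<Rightarrow> 'r" where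
  "dterm a b k = a * phi k * Yo ^ k * Xo ^ k * b"

text \<open>A representative of (a + II) \<diamond> (b + II): the sum of the terms up to a bound
  beyond which all terms lie in II.\<close>
definition dia :: "'r \<Rightarrow> 'r \<Rightarrow> 'r" where
  "dia a b = (let N = (SOME N. \<forall>k\<ge>N. dterm a b k \<in> II) in \<Sum>k<N. dterm a b k)"

end

end

theory Submission
  imports Defs "Jordan_Normal_Form.Determinant"
begin


definition wi :: "gen list \<Rightarrow> fa" where "wi u = (\<lambda>w. if w = u then 1 else 0)"

lemma fmul_gen_gen: "fmul (fgen a) (fgen b) = wi [a, b]"
proof
  fix w
  show "fmul (fgen a) (fgen b) w = wi [a, b] w"
  proof (cases "w = [a,b]")
    case True
    have "fmul (fgen a) (fgen b) w = (\<Sum>k\<in>{1}. fgen a (take k w) * fgen b (drop k w))"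
      unfolding fmul_def
      by (rule sum.mono_neutral_right) (auto simp: True fgen_def le_Suc_eq numeral_2_eq_2)
    then show ?thesis by (simp add: True fgen_def wi_def)
  next
    case False
    have z: "fgen a (take k w) * fgen b (drop k w) = 0" for k
    proof (cases "take k w = [a] \<and> drop k w = [b]")
      case True
      then have "w = [a,b]" by (metis append_Cons append_Nil append_take_drop_id)
      with False show ?thesis by simp
    qed (auto simp: fgen_def)
    show ?thesis using False by (simp only: fmul_def wi_def z) simp
  qed
qed

lemma fmul_fone: "fmul f fone = f"
proof
  fix w
  have "fmul f fone w = (\<Sum>k\<in>{length w}. f (take k w) * fone (drop k w))"
    unfolding fmul_def by (rule sum.mono_neutral_right) (auto simp: fone_def)
  then show "fmul f fone w = f w" by (simp add: fone_def)
qed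

lemma fgen_wi: "fgen a = wi [a]" by (simp add: fgen_def wi_def)
lemma fone_wi: "fone = wi []" by (simp add: fone_def wi_def fun_eq_iff)

definition fs :: "fa \<Rightarrow> bool" where "fs f \<longleftrightarrow> finite {w. f w \<noteq> 0}"

lemma fs_wi: "fs (wi u)" by (simp add: fs_def wi_def)
lemma fs_add: "fs f \<Longrightarrow> fs h \<Longrightarrow> fs (fadd f h)"
  unfolding fs_def fadd_def by (rule finite_subset[of _ "{w. f w \<noteq> 0} \<union> {w. h w \<noteq> 0}"]) auto
lemma fs_smul: "fs f \<Longrightarrow> fs (fsmul c f)"
  unfolding fs_def fsmul_def by (rule finite_subset[of _ "{w. f w \<noteq> 0}"]) auto

lemma fin_wi: "list_all (valid_gen n) u \<Longrightarrow> fin_fa n (wi u)" by (simp add: fin_fa_def wi_def)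
lemma fin_add: "fin_fa n f \<Longrightarrow> fin_fa n h \<Longrightarrow> fin_fa n (fadd f h)"
  using fs_add[of f h] unfolding fin_fa_def fs_def by (auto simp: fadd_def) (metis add.left_neutral)
lemma fin_smul: "fin_fa n f \<Longrightarrow> fin_fa n (fsmul c f)"
  using fs_smul[of f c] unfolding fin_fa_def fs_def by (auto simp: fsmul_def)

locale ehom =
  fixes e :: "complex \<Rightarrow> 'r::ring_1"
  assumes eadd: "\<And>a b. e (a + b) = e a + e b" and emul: "\<And>a b. e (a * b) = e a * e b"
    and eone: "e 1 = 1"
begin
lemma ezero: "e 0 = 0" using eadd[of 0 0] by simp

lemma ev_superset:
  assumes "finite A" "{w. f w \<noteq> 0} \<subseteq> A"
  shows "ev e g f = (\<Sum>w\<in>A. e (f w) * prod_list (map g w))"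
  unfolding ev_def by (rule sum.mono_neutral_left) (use assms ezero in auto)

lemma ev_add: "fs f \<Longrightarrow> fs h \<Longrightarrow> ev e g (fadd f h) = ev e g f + ev e g h"
proof -
  assume f: "fs f" and h: "fs h"
  let ?A = "{w. f w \<noteq> 0} \<union> {w. h w \<noteq> 0}"
  have fA: "finite ?A" using f h by (simp add: fs_def)
  have "ev e g (fadd f h) = (\<Sum>w\<in>?A. e (fadd f h w) * prod_list (map g w))"
    by (rule ev_superset[OF fA]) (auto simp: fadd_def)
  also have "\<dots> = (\<Sum>w\<in>?A. e (f w) * prod_list (map g w)) + (\<Sum>w\<in>?A. e (h w) * prod_list (map g w))"
    by (simp add: fadd_def eadd distrib_right sum.distrib)
  also have "\<dots> = ev e g f + ev e g h"
    by (simp add: ev_superset[OF fA])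
  finally show ?thesis .
qed

lemma ev_smul: "fs f \<Longrightarrow> ev e g (fsmul c f) = e c * ev e g f"
proof -
  assume f: "fs f"
  let ?A = "{w. f w \<noteq> 0}"
  have fA: "finite ?A" using f by (simp add: fs_def)
  have "ev e g (fsmul c f) = (\<Sum>w\<in>?A. e (fsmul c f w) * prod_list (map g w))"
    by (rule ev_superset[OF fA]) (auto simp: fsmul_def)
  also have "\<dots> = e c * ev e g f"
    by (simp add: fsmul_def emul sum_distrib_left ev_superset[OF fA] mult.assoc)
  finally show ?thesis .
qed

lemma ev_wi: "ev e g (wi u) = prod_list (map g u)"
  by (subst ev_superset[of "{u}"]) (auto simp: wi_def eone)

lemma ev_sum:
  assumes "finite I" "\<And>i. i \<in> I \<Longrightarrow> fs (F i)"
  shows "fs (\<lambda>w. \<Sum>i\<in>I. F i w) \<and> ev e g (\<lambda>w. \<Sum>i\<in>I. F i w) = (\<Sum>i\<in>I. ev e g (F i))"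
  using assms
proof (induct I rule: finite_induct)
  case empty
  have "(\<lambda>w. \<Sum>i\<in>{}. F i w) = fsmul 0 (wi [])" by (simp add: fsmul_def fun_eq_iff)
  then show ?case using ev_smul[OF fs_wi, where c=0] fs_smul[OF fs_wi] by (simp add: ezero)
next
  case (insert a I)
  have eq: "(\<lambda>w. \<Sum>i\<in>insert a I. F i w) = fadd (F a) (\<lambda>w. \<Sum>i\<in>I. F i w)"
    using insert by (simp add: fadd_def fun_eq_iff)
  show ?case unfolding eq using insert fs_add ev_add by auto
qed
end

lemma H_fa_ev:
  assumes "ehom e"
  shows "fin_fa n (H_fa n) \<and> ev e g (H_fa n) = Ho n e g"
proof -
  interpret ehom e by fact
  define F where "F i = fadd (wi [Dg i, Xg i]) (wi [Xg i, Dg i])" for i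
  have HF: "H_fa n = fsmul (-1/2) (\<lambda>w. \<Sum>i\<in>{1..n}. F i w)"
    by (simp add: H_fa_def F_def fmul_gen_gen)
  have fsF: "fs (F i)" for i by (simp add: F_def fs_add fs_wi)
  have finF: "i \<in> {1..n} \<Longrightarrow> fin_fa n (F i)" for i by (simp add: F_def fin_add fin_wi)
  have S: "fs (\<lambda>w. \<Sum>i\<in>{1..n}. F i w)" "ev e g (\<lambda>w. \<Sum>i\<in>{1..n}. F i w) = (\<Sum>i\<in>{1..n}. ev e g (F i))"
    using ev_sum[of "{1..n}" F g] fsF by auto
  have "fin_fa n (\<lambda>w. \<Sum>i\<in>{1..n}. F i w)"
    unfolding fin_fa_def
  proof
    show "finite {w. (\<Sum>i\<in>{1..n}. F i w) \<noteq> 0}" using S(1) by (simp add: fs_def)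
    show "\<forall>w. (\<Sum>i\<in>{1..n}. F i w) \<noteq> 0 \<longrightarrow> list_all (valid_gen n) w"
    proof (intro allI impI)
      fix w assume "(\<Sum>i\<in>{1..n}. F i w) \<noteq> 0"
      then obtain i where "i \<in> {1..n}" "F i w \<noteq> 0" by (meson sum.neutral)
      then show "list_all (valid_gen n) w" using finF unfolding fin_fa_def by blast
    qed
  qed
  then have "fin_fa n (H_fa n)" by (simp add: HF fin_smul)
  moreover have "ev e g (H_fa n) = Ho n e g"
    unfolding HF ev_smul[OF S(1)] S(2) Ho_def
    by (simp add: F_def ev_add fs_wi ev_wi dlow_def xup_def)
  ultimately show ?thesis by simp
qed

lemma loc_ehom: "is_localization n eta e g \<Longrightarrow> ehom e"
  unfolding is_localization_def ehom_def by blast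

lemma rel0:
  assumes L: "is_localization n eta e g" and r: "r \<in> rels n eta" and f: "fin_fa n r"
  shows "ev e g r = 0"
proof -
  have "fone \<in> S_fa n" unfolding S_fa_def by (rule CollectI, rule exI[of _ "[]"]) simp
  moreover have "fmul r fone \<in> ideal_gen n (rels n eta)" by (simp add: fmul_fone r ideal_gen.base)
  ultimately show ?thesis using L f unfolding is_localization_def by blast
qed

lemma loc_rels:
  assumes L: "is_localization n eta e g" and i: "i \<in> {1..n}" and j: "j \<in> {1..n}"
  shows "xup g i * xup g j = xup g j * xup g i"
    "dlow g i * dlow g j = dlow g j * dlow g i"
    "dlow g i * xup g j = xup g j * dlow g i + e (if i = j then 1 else 0)"
    "gup g i * xup g j = xup g j * gup g i"
    "gup g i * dlow g j = dlow g j * gup g i"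
    "gup g i * gup g j + gup g j * gup g i = e (2 * eta i j)"
proof -
  interpret ehom e using loc_ehom[OF L] .
  have em1: "e (-1) = -1" using eadd[of 1 "-1"] by (simp add: ezero eone eq_neg_iff_add_eq_0 add.commute)
  have eneg: "e (- a) = - e a" for a using emul[of "-1" a] em1 by simp
  have V: "valid_gen n (Xg i)" "valid_gen n (Xg j)" "valid_gen n (Dg i)" "valid_gen n (Dg j)"
    "valid_gen n (Gg i)" "valid_gen n (Gg j)" "1 \<le> i" "i \<le> n" "1 \<le> j" "j \<le> n" using i j by auto
  note simps = fmul_gen_gen fone_wi ev_add ev_smul fs_add fs_smul fs_wi ev_wi fin_add fin_smul fin_wi V em1 eneg eone
  have R: "rels n eta \<supseteq> { fadd (fmul (fgen (Xg i)) (fgen (Xg j))) (fsmul (-1) (fmul (fgen (Xg j)) (fgen (Xg i)))),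
       fadd (fmul (fgen (Dg i)) (fgen (Dg j))) (fsmul (-1) (fmul (fgen (Dg j)) (fgen (Dg i)))),
       fadd (fadd (fmul (fgen (Dg i)) (fgen (Xg j))) (fsmul (-1) (fmul (fgen (Xg j)) (fgen (Dg i)))))
            (fsmul (- (if i = j then 1 else 0)) fone),
       fadd (fmul (fgen (Gg i)) (fgen (Xg j))) (fsmul (-1) (fmul (fgen (Xg j)) (fgen (Gg i)))),
       fadd (fmul (fgen (Gg i)) (fgen (Dg j))) (fsmul (-1) (fmul (fgen (Dg j)) (fgen (Gg i)))),
       fadd (fadd (fmul (fgen (Gg i)) (fgen (Gg j))) (fmul (fgen (Gg j)) (fgen (Gg i))))
            (fsmul (- 2 * eta i j) fone) }"
    unfolding rels_def using i j by blast
  have "ev e g (fadd (fmul (fgen (Xg i)) (fgen (Xg j))) (fsmul (-1) (fmul (fgen (Xg j)) (fgen (Xg i))))) = 0"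
    by (rule rel0[OF L]) (use R i j in \<open>auto simp: fmul_gen_gen fone_wi intro!: fin_add fin_smul fin_wi simp: V\<close>)
  then show "xup g i * xup g j = xup g j * xup g i" by (simp add: simps xup_def)
  have "ev e g (fadd (fmul (fgen (Dg i)) (fgen (Dg j))) (fsmul (-1) (fmul (fgen (Dg j)) (fgen (Dg i))))) = 0"
    by (rule rel0[OF L]) (use R i j in \<open>auto simp: fmul_gen_gen fone_wi intro!: fin_add fin_smul fin_wi simp: V\<close>)
  then show "dlow g i * dlow g j = dlow g j * dlow g i" by (simp add: simps dlow_def)
  have "ev e g (fadd (fadd (fmul (fgen (Dg i)) (fgen (Xg j))) (fsmul (-1) (fmul (fgen (Xg j)) (fgen (Dg i)))))
            (fsmul (- (if i = j then 1 else 0)) fone)) = 0"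
    by (rule rel0[OF L]) (use R i j in \<open>auto simp: fmul_gen_gen fone_wi intro!: fin_add fin_smul fin_wi simp: V\<close>)
  then show "dlow g i * xup g j = xup g j * dlow g i + e (if i = j then 1 else 0)"
    by (simp add: simps dlow_def xup_def algebra_simps eq_neg_iff_add_eq_0 split: if_splits)
  have "ev e g (fadd (fmul (fgen (Gg i)) (fgen (Xg j))) (fsmul (-1) (fmul (fgen (Xg j)) (fgen (Gg i))))) = 0"
    by (rule rel0[OF L]) (use R i j in \<open>auto simp: fmul_gen_gen fone_wi intro!: fin_add fin_smul fin_wi simp: V\<close>)
  then show "gup g i * xup g j = xup g j * gup g i" by (simp add: simps xup_def gup_def)
  have "ev e g (fadd (fmul (fgen (Gg i)) (fgen (Dg j))) (fsmul (-1) (fmul (fgen (Dg j)) (fgen (Gg i))))) = 0"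
    by (rule rel0[OF L]) (use R i j in \<open>auto simp: fmul_gen_gen fone_wi intro!: fin_add fin_smul fin_wi simp: V\<close>)
  then show "gup g i * dlow g j = dlow g j * gup g i" by (simp add: simps dlow_def gup_def)
  have "ev e g (fadd (fadd (fmul (fgen (Gg i)) (fgen (Gg j))) (fmul (fgen (Gg j)) (fgen (Gg i))))
            (fsmul (- 2 * eta i j) fone)) = 0"
    by (rule rel0[OF L]) (use R i j in \<open>auto simp: fmul_gen_gen fone_wi intro!: fin_add fin_smul fin_wi simp: V\<close>)
  then show "gup g i * gup g j + gup g j * gup g i = e (2 * eta i j)"
    by (simp add: simps gup_def algebra_simps eq_neg_iff_add_eq_0)
qed

lemma loc_units:
  assumes L: "is_localization n eta e g"
  shows "is_unit_r (Ho n e g + e (of_int k))"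
proof -
  interpret ehom e using loc_ehom[OF L] .
  let ?s = "foldr (\<lambda>k acc. fmul (fadd (H_fa n) (fsmul (of_int k) fone)) acc) [k] fone"
  have s: "?s \<in> S_fa n" unfolding S_fa_def by blast
  have "?s = fadd (H_fa n) (fsmul (of_int k) (wi []))" by (simp add: fmul_fone, simp add: fone_wi)
  moreover have "fs (H_fa n)" using H_fa_ev[OF loc_ehom[OF L], of n g] by (simp add: fin_fa_def fs_def)
  ultimately have "ev e g ?s = Ho n e g + e (of_int k)"
    using H_fa_ev[OF loc_ehom[OF L], of n g] by (simp add: ev_add ev_smul fs_smul fs_wi ev_wi)
  then show ?thesis using s L unfolding is_localization_def by metis
qed



lemma etainv_sym:
  fixes eta etainv :: "nat \<Rightarrow> nat \<Rightarrow> complex"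
  assumes sym: "\<forall>a\<in>{1..n}. \<forall>b\<in>{1..n}. eta a b = eta b a"
    and inv: "\<forall>a\<in>{1..n}. \<forall>c\<in>{1..n}. (\<Sum>b\<in>{1..n}. eta a b * etainv b c) = (if a = c then 1 else 0)"
  shows "\<forall>a\<in>{1..n}. \<forall>c\<in>{1..n}. etainv a c = etainv c a"
proof -
  define A where "A = mat n n (\<lambda>(a,b). eta (Suc a) (Suc b))"
  define B where "B = mat n n (\<lambda>(a,b). etainv (Suc a) (Suc b))"
  have sh: "(\<Sum>b\<in>{1..n}. f b) = (\<Sum>b<n. f (Suc b))" for f :: "nat \<Rightarrow> complex"
    by (induct n) (simp_all add: sum.cl_ivl_Suc)
  have Ac: "A \<in> carrier_mat n n" and Bc: "B \<in> carrier_mat n n" by (auto simp: A_def B_def)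
  have ent: "(A * B) $$ (a, c) = 1\<^sub>m n $$ (a, c)" if a: "a < n" and c: "c < n" for a c
  proof -
    have "(A * B) $$ (a, c) = (\<Sum>b<n. eta (Suc a) (Suc b) * etainv (Suc b) (Suc c))"
      using a c by (simp add: A_def B_def scalar_prod_def atLeast0LessThan)
    also have "\<dots> = (\<Sum>b\<in>{1..n}. eta (Suc a) b * etainv b (Suc c))" by (rule sh[symmetric])
    also have "\<dots> = (if a = c then 1 else 0)" using inv a c by auto
    finally show ?thesis using a c by simp
  qed
  have AB: "A * B = 1\<^sub>m n"
    using ent by (intro eq_matI) (auto simp: A_def B_def)
  have BA: "B * A = 1\<^sub>m n"
    by (rule mat_mult_left_right_inverse[OF Ac Bc AB])
  have AT: "transpose_mat A = A"
    using sym by (intro eq_matI) (auto simp: A_def)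
  have "transpose_mat B * A = 1\<^sub>m n"
    using transpose_mult[OF Ac Bc] AB AT by simp
  hence "transpose_mat B = B"
    using assoc_mult_mat[of "transpose_mat B" n n A n B n] Ac Bc AB by simp
  show ?thesis
  proof (intro ballI)
    fix a c assume a: "a \<in> {1..n}" and c: "c \<in> {1..n}"
    then obtain a' c' where a': "a = Suc a'" "a' < n" and c': "c = Suc c'" "c' < n"
      by (metis Suc_le_D Suc_le_lessD atLeastAtMost_iff less_Suc_eq_le not0_implies_Suc not_one_le_zero)
    have "transpose_mat B $$ (c', a') = B $$ (c', a')" using \<open>transpose_mat B = B\<close> by simp
    thus "etainv a c = etainv c a" using a' c' by (simp add: B_def)
  qed
qed



declare One_nat_def[simp del]


locale walg = ehom e for n :: nat and eta etainv :: "nat \<Rightarrow> nat \<Rightarrow> complex"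
    and e :: "complex \<Rightarrow> 'r::ring_1" and g :: "gen \<Rightarrow> 'r" +
  assumes ecomm: "\<And>c r. e c * r = r * e c"
    and esym: "\<And>a b. a \<in> {1..n} \<Longrightarrow> b \<in> {1..n} \<Longrightarrow> eta a b = eta b a"
    and isym: "\<And>a b. a \<in> {1..n} \<Longrightarrow> b \<in> {1..n} \<Longrightarrow> etainv a b = etainv b a"
    and rinvr: "\<And>a c. a \<in> {1..n} \<Longrightarrow> c \<in> {1..n} \<Longrightarrow>
        (\<Sum>b\<in>{1..n}. eta a b * etainv b c) = (if a = c then 1 else 0)"
    and rXX: "\<And>i j. i \<in> {1..n} \<Longrightarrow> j \<in> {1..n} \<Longrightarrow> xup g i * xup g j = xup g j * xup g i"
    and rDD: "\<And>i j. i \<in> {1..n} \<Longrightarrow> j \<in> {1..n} \<Longrightarrow> dlow g i * dlow g j = dlow g j * dlow g i"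
    and rDX: "\<And>i j. i \<in> {1..n} \<Longrightarrow> j \<in> {1..n} \<Longrightarrow>
        dlow g i * xup g j = xup g j * dlow g i + e (if i = j then 1 else 0)"
    and rGX: "\<And>i j. i \<in> {1..n} \<Longrightarrow> j \<in> {1..n} \<Longrightarrow> gup g i * xup g j = xup g j * gup g i"
    and rGD: "\<And>i j. i \<in> {1..n} \<Longrightarrow> j \<in> {1..n} \<Longrightarrow> gup g i * dlow g j = dlow g j * gup g i"
    and rGG: "\<And>i j. i \<in> {1..n} \<Longrightarrow> j \<in> {1..n} \<Longrightarrow>
        gup g i * gup g j + gup g j * gup g i = e (2 * eta i j)"
    and units: "\<And>k. is_unit_r (Ho n e g + e (of_int k))"
begin

abbreviation "I \<equiv> {1..n}"
abbreviation "x \<equiv> xup g"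
abbreviation "d \<equiv> dlow g"
abbreviation "\<gamma> \<equiv> gup g"
abbreviation "xl \<equiv> xlow n etainv e g"
abbreviation "du \<equiv> dup n eta e g"
abbreviation "gl \<equiv> glow n etainv e g"
abbreviation "XX \<equiv> Xo n e g"
abbreviation "YY \<equiv> Yo n etainv e g"
abbreviation "HH \<equiv> Ho n e g"
abbreviation "EE \<equiv> Eo n eta e g"
abbreviation "FF \<equiv> Fo n etainv e g"
abbreviation "JJ \<equiv> II n eta etainv e g"
abbreviation "DT \<equiv> dterm n etainv e g"
abbreviation "DIA \<equiv> dia n eta etainv e g"
abbreviation "PHI \<equiv> phi n e g"

definition c0 :: complex where "c0 = \<i> / complex_of_real (sqrt 2)"
lemma c0sq: "c0 * c0 = - 1/2"
proof -
  have "(complex_of_real (sqrt 2))^2 = 2" by (simp add: of_real_power[symmetric])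
  then show ?thesis by (simp add: c0_def power2_eq_square[symmetric] power_divide)
qed
lemma c0nz: "c0 \<noteq> 0" by (simp add: c0_def)

lemma em1: "e (-1) = -1" using eadd[of 1 "-1"] by (simp add: ezero eone eq_neg_iff_add_eq_0 add.commute)
lemma eneg: "e (- a) = - e a" using emul[of "-1" a] em1 by simp
lemma ediff: "e (a - b) = e a - e b" using eadd[of a "-b"] eneg by simp
lemma enat: "e (of_nat m) = of_nat m" by (induct m) (simp_all add: ezero eadd eone)
lemma eint: "e (of_int k) = of_int k"
  by (cases k) (simp_all add: enat eneg ediff eone)
lemma etwo: "e 2 = 2" using enat[of 2] by simp
lemma ecomm2: "r * (e c * s) = e c * (r * s)"
  by (metis ecomm mult.assoc)
lemma emul2: "e a * (e b * s) = e (a * b) * s" by (simp add: emul mult.assoc)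
lemma esum: "e (\<Sum>i\<in>A. f i) = (\<Sum>i\<in>A. e (f i))"
  by (induct A rule: infinite_finite_induct) (simp_all add: ezero eadd)
lemma e_if: "e (if P then a else b) = (if P then e a else e b)" by simp

lemma sum_delta_r: "j \<in> I \<Longrightarrow> (\<Sum>l\<in>I. f l * e (if l = j then c else 0)) = f j * e c"
proof -
  assume j: "j \<in> I"
  have "(\<Sum>l\<in>I. f l * e (if l = j then c else 0)) = (\<Sum>l\<in>I. if l = j then f l * e c else 0)"
    by (rule sum.cong) (auto simp: ezero)
  then show ?thesis using j by simp
qed
lemma sum_delta_l: "j \<in> I \<Longrightarrow> (\<Sum>l\<in>I. e (if l = j then c else 0) * f l) = e c * f j"
proof -
  assume j: "j \<in> I"
  have "(\<Sum>l\<in>I. e (if l = j then c else 0) * f l) = (\<Sum>l\<in>I. if l = j then e c * f l else 0)"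
    by (rule sum.cong) (auto simp: ezero)
  then show ?thesis using j by simp
qed
lemma sum_delta_r': "j \<in> I \<Longrightarrow> (\<Sum>l\<in>I. f l * e (if j = l then c else 0)) = f j * e c"
proof -
  assume j: "j \<in> I"
  have "(\<Sum>l\<in>I. f l * e (if j = l then c else 0)) = (\<Sum>l\<in>I. if l = j then f l * e c else 0)"
    by (rule sum.cong) (auto simp: ezero)
  then show ?thesis using j by simp
qed

definition Hk :: "int \<Rightarrow> 'r" where "Hk k = HH + of_int k"
lemma Hk_unit: "is_unit_r (Hk k)" using units[of k] by (simp add: Hk_def eint)
lemma Hk0: "Hk 0 = HH" by (simp add: Hk_def)
lemma Hk1: "Hk 1 = HH + 1" by (simp add: Hk_def)

lemma rinv_props: "is_unit_r u \<Longrightarrow> u * rinv u = 1 \<and> rinv u * u = 1"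
  unfolding is_unit_r_def rinv_def by (rule someI_ex)
lemma rinv_shift:
  assumes u: "is_unit_r u" and v: "is_unit_r v" and c: "u * a = a * v"
  shows "rinv u * a = a * rinv v"
proof -
  have "rinv u * a = rinv u * a * (v * rinv v)" using rinv_props[OF v] by simp
  also have "\<dots> = rinv u * (u * a) * rinv v" by (simp add: c mult.assoc)
  also have "\<dots> = a * rinv v" using rinv_props[OF u] by (simp add: mult.assoc[symmetric])
  finally show ?thesis .
qed
lemma rinv_unique: "is_unit_r u \<Longrightarrow> t * u = 1 \<Longrightarrow> rinv u = t"
  by (metis mult.assoc mult_1_left mult_1_right rinv_props)

lemma lin_comm:
  fixes A B :: 'r
  assumes "\<And>j. j \<in> I \<Longrightarrow> A * f j = f j * B"
  shows "A * (\<Sum>j\<in>I. e (c j) * f j) = (\<Sum>j\<in>I. e (c j) * f j) * B"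
proof -
  have "A * (\<Sum>j\<in>I. e (c j) * f j) = (\<Sum>j\<in>I. A * (e (c j) * f j))" by (rule sum_distrib_left)
  also have "\<dots> = (\<Sum>j\<in>I. (e (c j) * f j) * B)"
  proof (rule sum.cong[OF refl])
    fix j assume j: "j \<in> I"
    show "A * (e (c j) * f j) = (e (c j) * f j) * B"
      by (simp add: ecomm2 assms[OF j] mult.assoc)
  qed
  also have "\<dots> = (\<Sum>j\<in>I. e (c j) * f j) * B" by (rule sum_distrib_right[symmetric])
  finally show ?thesis .
qed
lemma sum_comm:
  fixes A B :: 'r
  assumes "\<And>j. j \<in> I \<Longrightarrow> A * f j = f j * B"
  shows "A * (\<Sum>j\<in>I. f j) = (\<Sum>j\<in>I. f j) * B"
proof -
  have "A * (\<Sum>j\<in>I. f j) = (\<Sum>j\<in>I. A * f j)" by (rule sum_distrib_left)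
  also have "\<dots> = (\<Sum>j\<in>I. f j * B)" by (rule sum.cong[OF refl]) (rule assms)
  also have "\<dots> = (\<Sum>j\<in>I. f j) * B" by (rule sum_distrib_right[symmetric])
  finally show ?thesis .
qed

lemma Sx_term: "l \<in> I \<Longrightarrow> j \<in> I \<Longrightarrow>
   (d l * x l + x l * d l) * x j = x j * (d l * x l + x l * d l) + e (if l = j then 1 else 0) * x l + x l * e (if l = j then 1 else 0)"
proof -
  assume l: "l \<in> I" and j: "j \<in> I"
  have "d l * x l * x j = d l * (x j * x l)" by (simp add: mult.assoc rXX[OF l j])
  also have "\<dots> = (d l * x j) * x l" by (simp add: mult.assoc)
  also have "\<dots> = (x j * d l + e (if l = j then 1 else 0)) * x l" by (simp add: rDX[OF l j])
  finally have A: "d l * x l * x j = x j * d l * x l + e (if l = j then 1 else 0) * x l" by (simp add: distrib_right)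
  have "x l * d l * x j = x l * (d l * x j)" by (simp add: mult.assoc)
  also have "\<dots> = x l * (x j * d l + e (if l = j then 1 else 0))" by (simp add: rDX[OF l j])
  also have "\<dots> = (x l * x j) * d l + x l * e (if l = j then 1 else 0)" by (simp add: distrib_left mult.assoc)
  also have "\<dots> = (x j * x l) * d l + x l * e (if l = j then 1 else 0)" by (simp add: rXX[OF l j])
  finally have B: "x l * d l * x j = x j * x l * d l + x l * e (if l = j then 1 else 0)" .
  from A B show ?thesis by (simp add: distrib_left distrib_right mult.assoc add_ac)
qed

lemma Hx: "j \<in> I \<Longrightarrow> HH * x j = x j * HH - x j"
proof -
  assume j: "j \<in> I"
  have "(\<Sum>l\<in>I. d l * x l + x l * d l) * x j = (\<Sum>l\<in>I. x j * (d l * x l + x l * d l) + e (if l = j then 1 else 0) * x l + x l * e (if l = j then 1 else 0))"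
    unfolding sum_distrib_right by (rule sum.cong[OF refl]) (rule Sx_term[OF _ j])
  also have "\<dots> = x j * (\<Sum>l\<in>I. d l * x l + x l * d l) + e 1 * x j + x j * e 1"
    by (simp add: sum.distrib sum_distrib_left distrib_left sum_delta_l[OF j] sum_delta_r[OF j] del: eone)
  finally have S: "(\<Sum>l\<in>I. d l * x l + x l * d l) * x j = x j * (\<Sum>l\<in>I. d l * x l + x l * d l) + 2 * x j"
    by (simp add: eone mult_2)
  have "HH * x j = e (-1/2) * (x j * (\<Sum>l\<in>I. d l * x l + x l * d l) + 2 * x j)"
    by (simp add: Ho_def mult.assoc S)
  also have "\<dots> = x j * HH + e (-1/2) * e 2 * x j"
    by (simp add: Ho_def distrib_left ecomm2 etwo mult.assoc)
  also have "\<dots> = x j * HH - x j" by (simp add: emul[symmetric] eneg eone)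
  finally show ?thesis .
qed

lemma sum_delta_l': "j \<in> I \<Longrightarrow> (\<Sum>l\<in>I. e (if j = l then c else 0) * f l) = e c * f j"
proof -
  assume j: "j \<in> I"
  have "(\<Sum>l\<in>I. e (if j = l then c else 0) * f l) = (\<Sum>l\<in>I. if l = j then e c * f l else 0)"
    by (rule sum.cong) (auto simp: ezero)
  then show ?thesis using j by simp
qed

lemma Sd_term: "l \<in> I \<Longrightarrow> j \<in> I \<Longrightarrow>
   (d l * x l + x l * d l) * d j = d j * (d l * x l + x l * d l) - d l * e (if j = l then 1 else 0) - e (if j = l then 1 else 0) * d l"
proof -
  assume l: "l \<in> I" and j: "j \<in> I"
  have xd: "x l * d j = d j * x l - e (if j = l then 1 else 0)" using rDX[OF j l] by (simp add: algebra_simps)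
  have "d l * x l * d j = d l * (d j * x l - e (if j = l then 1 else 0))" by (simp add: mult.assoc xd)
  also have "\<dots> = (d l * d j) * x l - d l * e (if j = l then 1 else 0)" by (simp add: right_diff_distrib mult.assoc)
  also have "\<dots> = (d j * d l) * x l - d l * e (if j = l then 1 else 0)" by (simp add: rDD[OF l j])
  finally have A: "d l * x l * d j = d j * d l * x l - d l * e (if j = l then 1 else 0)" .
  have "x l * d l * d j = x l * (d j * d l)" by (simp add: mult.assoc rDD[OF l j])
  also have "\<dots> = (x l * d j) * d l" by (simp add: mult.assoc)
  also have "\<dots> = (d j * x l - e (if j = l then 1 else 0)) * d l" by (simp add: xd)
  finally have B: "x l * d l * d j = d j * x l * d l - e (if j = l then 1 else 0) * d l" by (simp add: left_diff_distrib)
  from A B show ?thesis by (simp add: distrib_left distrib_right mult.assoc algebra_simps)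
qed

lemma Hd: "j \<in> I \<Longrightarrow> HH * d j = d j * HH + d j"
proof -
  assume j: "j \<in> I"
  have "(\<Sum>l\<in>I. d l * x l + x l * d l) * d j = (\<Sum>l\<in>I. d j * (d l * x l + x l * d l) - d l * e (if j = l then 1 else 0) - e (if j = l then 1 else 0) * d l)"
    unfolding sum_distrib_right by (rule sum.cong[OF refl]) (rule Sd_term[OF _ j])
  also have "\<dots> = d j * (\<Sum>l\<in>I. d l * x l + x l * d l) - d j * e 1 - e 1 * d j"
    by (simp add: sum_subtractf sum.distrib sum_distrib_left distrib_left sum_delta_l'[OF j] sum_delta_r'[OF j] del: eone)
  finally have S: "(\<Sum>l\<in>I. d l * x l + x l * d l) * d j = d j * (\<Sum>l\<in>I. d l * x l + x l * d l) - 2 * d j"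
    by (simp add: eone mult_2)
  have "HH * d j = e (-1/2) * (d j * (\<Sum>l\<in>I. d l * x l + x l * d l) - 2 * d j)"
    by (simp add: Ho_def mult.assoc S)
  also have "\<dots> = d j * HH - e (-1/2) * e 2 * d j"
    by (simp add: Ho_def right_diff_distrib ecomm2 etwo mult.assoc)
  also have "\<dots> = d j * HH + d j" by (simp add: emul[symmetric] eneg eone)
  finally show ?thesis .
qed

lemma Hg: "j \<in> I \<Longrightarrow> HH * \<gamma> j = \<gamma> j * HH"
proof -
  assume j: "j \<in> I"
  have t: "(d l * x l + x l * d l) * \<gamma> j = \<gamma> j * (d l * x l + x l * d l)" if l: "l \<in> I" for l
  proof -
    have "d l * x l * \<gamma> j = d l * (\<gamma> j * x l)" by (simp add: mult.assoc rGX[OF j l])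
    also have "\<dots> = (d l * \<gamma> j) * x l" by (simp add: mult.assoc)
    also have "\<dots> = \<gamma> j * d l * x l" by (simp add: rGD[OF j l])
    finally have A: "d l * x l * \<gamma> j = \<gamma> j * d l * x l" .
    have "x l * d l * \<gamma> j = x l * (\<gamma> j * d l)" by (simp add: mult.assoc rGD[OF j l])
    also have "\<dots> = (x l * \<gamma> j) * d l" by (simp add: mult.assoc)
    also have "\<dots> = \<gamma> j * x l * d l" by (simp add: rGX[OF j l])
    finally have B: "x l * d l * \<gamma> j = \<gamma> j * x l * d l" .
    from A B show ?thesis by (simp add: distrib_left distrib_right mult.assoc)
  qed
  have "(\<Sum>l\<in>I. d l * x l + x l * d l) * \<gamma> j = \<gamma> j * (\<Sum>l\<in>I. d l * x l + x l * d l)"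
    by (rule sum_comm[symmetric]) (rule t[symmetric])
  then show ?thesis by (simp add: Ho_def mult.assoc ecomm2)
qed

lemma Hk_x: "j \<in> I \<Longrightarrow> Hk k * x j = x j * Hk (k - 1)"
  by (simp add: Hk_def distrib_left distrib_right Hx mult_of_int_commute algebra_simps)
lemma Hk_d: "j \<in> I \<Longrightarrow> Hk k * d j = d j * Hk (k + 1)"
  by (simp add: Hk_def distrib_left distrib_right Hd mult_of_int_commute algebra_simps)
lemma Hk_g: "j \<in> I \<Longrightarrow> Hk k * \<gamma> j = \<gamma> j * Hk k"
  by (simp add: Hk_def distrib_left distrib_right Hg mult_of_int_commute algebra_simps)
lemma Hk_xl: "Hk k * xl j = xl j * Hk (k - 1)"
  unfolding xlow_def by (rule lin_comm) (rule Hk_x)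
lemma Hk_du: "Hk k * du j = du j * Hk (k + 1)"
  unfolding dup_def by (rule lin_comm) (rule Hk_d)
lemma Hk_gl: "Hk k * gl j = gl j * Hk k"
  unfolding glow_def by (rule lin_comm) (rule Hk_g)
lemma Hk_Y: "Hk k * YY = YY * Hk (k - 1)"
proof -
  have "Hk k * (\<Sum>l\<in>I. \<gamma> l * xl l) = (\<Sum>l\<in>I. \<gamma> l * xl l) * Hk (k - 1)"
  proof (rule sum_comm)
    fix l assume l: "l \<in> I"
    have "Hk k * (\<gamma> l * xl l) = (Hk k * \<gamma> l) * xl l" by (simp add: mult.assoc)
    also have "\<dots> = \<gamma> l * (Hk k * xl l)" by (simp add: Hk_g[OF l] mult.assoc)
    finally show "Hk k * (\<gamma> l * xl l) = \<gamma> l * xl l * Hk (k - 1)" by (simp add: Hk_xl mult.assoc)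
  qed
  then show ?thesis by (simp add: Yo_def ecomm2 mult.assoc)
qed
lemma Hk_F: "Hk k * FF = FF * Hk (k - 2)"
proof -
  have "Hk k * (\<Sum>l\<in>I. x l * xl l) = (\<Sum>l\<in>I. x l * xl l) * Hk (k - 2)"
  proof (rule sum_comm)
    fix l assume l: "l \<in> I"
    have "Hk k * (x l * xl l) = x l * (Hk (k - 1) * xl l)" by (simp add: Hk_x[OF l] flip: mult.assoc)
    also have "\<dots> = x l * xl l * Hk (k - 2)" by (simp add: Hk_xl mult.assoc)
    finally show "Hk k * (x l * xl l) = x l * xl l * Hk (k - 2)" .
  qed
  then show ?thesis by (simp add: Fo_def ecomm2 mult.assoc)
qed

lemma ri_x: "j \<in> I \<Longrightarrow> rinv (Hk k) * x j = x j * rinv (Hk (k - 1))"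
  by (rule rinv_shift[OF Hk_unit Hk_unit Hk_x])
lemma ri_d: "j \<in> I \<Longrightarrow> rinv (Hk k) * d j = d j * rinv (Hk (k + 1))"
  by (rule rinv_shift[OF Hk_unit Hk_unit Hk_d])
lemma ri_g: "j \<in> I \<Longrightarrow> rinv (Hk k) * \<gamma> j = \<gamma> j * rinv (Hk k)"
  by (rule rinv_shift[OF Hk_unit Hk_unit Hk_g])
lemma ri_xl: "rinv (Hk k) * xl j = xl j * rinv (Hk (k - 1))"
  by (rule rinv_shift[OF Hk_unit Hk_unit Hk_xl])
lemma ri_gl: "rinv (Hk k) * gl j = gl j * rinv (Hk k)"
  by (rule rinv_shift[OF Hk_unit Hk_unit Hk_gl])
lemma ri_Y: "rinv (Hk k) * YY = YY * rinv (Hk (k - 1))"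
  by (rule rinv_shift[OF Hk_unit Hk_unit Hk_Y])
lemma ri_F: "rinv (Hk k) * FF = FF * rinv (Hk (k - 2))"
  by (rule rinv_shift[OF Hk_unit Hk_unit Hk_F])

lemma II_mem: "YY * a + FF * b + c * XX + d' * EE \<in> JJ"
  unfolding II_def by blast
lemma II_iff: "p \<in> JJ \<longleftrightarrow> (\<exists>a b c d'. p = YY * a + FF * b + c * XX + d' * EE)"
  unfolding II_def by (rule iffI) (erule CollectE, blast, rule CollectI, blast)
lemma II_Y: "YY * a \<in> JJ" using II_mem[of a 0 0 0] by simp
lemma II_X: "c * XX \<in> JJ" using II_mem[of 0 0 c 0] by simp
lemma II_zero: "0 \<in> JJ" using II_Y[of 0] by simp
lemma II_add: "p \<in> JJ \<Longrightarrow> q \<in> JJ \<Longrightarrow> p + q \<in> JJ"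
proof -
  assume "p \<in> JJ" "q \<in> JJ"
  then obtain a b c d' a' b' c' d'' where "p = YY * a + FF * b + c * XX + d' * EE" "q = YY * a' + FF * b' + c' * XX + d'' * EE"
    unfolding II_iff by metis
  then have eq: "p + q = YY * (a + a') + FF * (b + b') + (c + c') * XX + (d' + d'') * EE"
    by (simp add: algebra_simps)
  show ?thesis unfolding eq by (rule II_mem)
qed
lemma II_neg: "p \<in> JJ \<Longrightarrow> - p \<in> JJ"
proof -
  assume "p \<in> JJ"
  then obtain a b c d' where "p = YY * a + FF * b + c * XX + d' * EE"
    unfolding II_iff by metis
  then have eq: "- p = YY * (- a) + FF * (- b) + (- c) * XX + (- d') * EE"
    by (simp add: algebra_simps)
  show ?thesis unfolding eq by (rule II_mem)
qed
lemma II_diff: "p \<in> JJ \<Longrightarrow> q \<in> JJ \<Longrightarrow> p - q \<in> JJ"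
  unfolding diff_conv_add_uminus by (rule II_add, assumption, rule II_neg)
lemma II_sum: "(\<And>k. k \<in> A \<Longrightarrow> f k \<in> JJ) \<Longrightarrow> sum f A \<in> JJ"
  by (induct A rule: infinite_finite_induct) (simp_all add: II_zero II_add)
lemma II_lmul:
  assumes "t * YY = YY * tY" "t * FF = FF * tF" "p \<in> JJ"
  shows "t * p \<in> JJ"
proof -
  obtain a b c d' where "p = YY * a + FF * b + c * XX + d' * EE"
    using assms(3) unfolding II_iff by metis
  then have eq: "t * p = YY * (tY * a) + FF * (tF * b) + (t * c) * XX + (t * d') * EE"
    by (simp add: distrib_left assms(1,2) flip: mult.assoc)
  show ?thesis unfolding eq by (rule II_mem)
qed
lemma II_e: "p \<in> JJ \<Longrightarrow> e c * p \<in> JJ"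
  by (rule II_lmul[OF ecomm ecomm])
lemma II_ri: "p \<in> JJ \<Longrightarrow> rinv (Hk k) * p \<in> JJ"
  by (rule II_lmul[OF ri_Y ri_F])

definition eqv (infix "\<approx>" 50) where "a \<approx> b \<longleftrightarrow> a - b \<in> JJ"
lemma eqv_refl: "a \<approx> a" by (simp add: eqv_def II_zero)
lemma eqv_sym: "a \<approx> b \<Longrightarrow> b \<approx> a" unfolding eqv_def using II_neg[of "a - b"] by simp
lemma eqv_trans: "a \<approx> b \<Longrightarrow> b \<approx> c \<Longrightarrow> a \<approx> c"
proof -
  assume A: "a \<approx> b" and B: "b \<approx> c"
  have eq: "a - c = (a - b) + (b - c)" by simp
  show ?thesis unfolding eqv_def eq using A B unfolding eqv_def by (rule II_add)
qed
lemma eqv_add: "a \<approx> b \<Longrightarrow> c \<approx> c' \<Longrightarrow> a + c \<approx> b + c'"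
proof -
  assume A: "a \<approx> b" and C: "c \<approx> c'"
  have eq: "a + c - (b + c') = (a - b) + (c - c')" by (simp add: algebra_simps)
  show ?thesis unfolding eqv_def eq using A C unfolding eqv_def by (rule II_add)
qed
lemma eqv_diff: "a \<approx> b \<Longrightarrow> c \<approx> c' \<Longrightarrow> a - c \<approx> b - c'"
proof -
  assume A: "a \<approx> b" and C: "c \<approx> c'"
  have eq: "a - c - (b - c') = (a - b) - (c - c')" by (simp add: algebra_simps)
  show ?thesis unfolding eqv_def eq using A C unfolding eqv_def by (rule II_diff)
qed
lemma eqv_e: "a \<approx> b \<Longrightarrow> e c * a \<approx> e c * b"
  unfolding eqv_def using II_e[of "a - b" c] by (simp add: right_diff_distrib)
lemma eqv_ri: "a \<approx> b \<Longrightarrow> rinv (Hk k) * a \<approx> rinv (Hk k) * b"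
  unfolding eqv_def using II_ri[of "a - b" k] by (simp add: right_diff_distrib)
lemma eqv_Y: "a = b + YY * t \<Longrightarrow> a \<approx> b" by (simp add: eqv_def II_Y)
lemma eqv_X: "a = b + t * XX \<Longrightarrow> a \<approx> b" by (simp add: eqv_def II_X)
lemma eqv_eq: "a = b \<Longrightarrow> a \<approx> b" by (simp add: eqv_refl)
lemma eqv_sum: "(\<And>k. k \<in> A \<Longrightarrow> f k \<approx> f' k) \<Longrightarrow> sum f A \<approx> sum f' A"
  unfolding eqv_def using II_sum[of A "\<lambda>k. f k - f' k"] by (simp add: sum_subtractf)
lemma eqv_0: "a \<approx> 0 \<longleftrightarrow> a \<in> JJ" by (simp add: eqv_def)

abbreviation "SX \<equiv> (\<Sum>l\<in>I. \<gamma> l * d l)"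
abbreviation "SY \<equiv> (\<Sum>l\<in>I. \<gamma> l * xl l)"
lemma XX_SX: "XX = e c0 * SX" by (simp add: Xo_def c0_def)
lemma YY_SY: "YY = e c0 * SY" by (simp add: Yo_def c0_def)

lemma X_x: "j \<in> I \<Longrightarrow> XX * x j = x j * XX + e c0 * \<gamma> j"
proof -
  assume j: "j \<in> I"
  have t: "\<gamma> l * d l * x j = x j * (\<gamma> l * d l) + \<gamma> l * e (if l = j then 1 else 0)" if l: "l \<in> I" for l
  proof -
    have "\<gamma> l * d l * x j = \<gamma> l * (x j * d l + e (if l = j then 1 else 0))" by (simp add: mult.assoc rDX[OF l j])
    also have "\<dots> = (\<gamma> l * x j) * d l + \<gamma> l * e (if l = j then 1 else 0)" by (simp add: distrib_left mult.assoc)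
    finally show ?thesis by (simp add: rGX[OF l j] mult.assoc)
  qed
  have "SX * x j = (\<Sum>l\<in>I. x j * (\<gamma> l * d l) + \<gamma> l * e (if l = j then 1 else 0))"
    unfolding sum_distrib_right by (rule sum.cong[OF refl]) (rule t)
  also have "\<dots> = x j * SX + \<gamma> j * e 1"
    by (simp only: sum.distrib sum_distrib_left sum_delta_r[OF j])
  finally have "SX * x j = x j * SX + \<gamma> j" by (simp add: eone)
  then show ?thesis by (simp add: XX_SX mult.assoc distrib_left ecomm2)
qed

lemma X_d: "j \<in> I \<Longrightarrow> XX * d j = d j * XX"
proof -
  assume j: "j \<in> I"
  have "SX * d j = d j * SX"
  proof (rule sum_comm[symmetric])
    fix l assume l: "l \<in> I"
    have "\<gamma> l * d l * d j = (\<gamma> l * d j) * d l" by (simp add: mult.assoc rDD[OF l j])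
    then show "d j * (\<gamma> l * d l) = \<gamma> l * d l * d j" by (simp add: rGD[OF l j] mult.assoc)
  qed
  then show ?thesis by (simp add: XX_SX mult.assoc ecomm2)
qed
lemma X_du: "XX * du j = du j * XX"
  unfolding dup_def by (rule lin_comm) (rule X_d)

lemma X_g: "j \<in> I \<Longrightarrow> XX * \<gamma> j = 2 * (e c0 * du j) - \<gamma> j * XX"
proof -
  assume j: "j \<in> I"
  have t: "\<gamma> l * d l * \<gamma> j = e 2 * (e (eta j l) * d l) - \<gamma> j * (\<gamma> l * d l)" if l: "l \<in> I" for l
  proof -
    have "\<gamma> l * d l * \<gamma> j = (\<gamma> l * \<gamma> j) * d l" by (simp add: mult.assoc rGD[OF j l])
    also have "\<dots> = (e (2 * eta l j) - \<gamma> j * \<gamma> l) * d l"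
      using rGG[OF l j] by (metis add_diff_cancel_right')
    also have "\<dots> = e 2 * (e (eta j l) * d l) - \<gamma> j * (\<gamma> l * d l)"
      by (simp add: left_diff_distrib emul mult.assoc esym[OF l j])
    finally show ?thesis .
  qed
  have "SX * \<gamma> j = (\<Sum>l\<in>I. e 2 * (e (eta j l) * d l) - \<gamma> j * (\<gamma> l * d l))"
    unfolding sum_distrib_right by (rule sum.cong[OF refl]) (rule t)
  also have "\<dots> = 2 * du j - \<gamma> j * SX"
    by (simp add: sum_subtractf sum_distrib_left[symmetric] dup_def etwo)
  finally have "SX * \<gamma> j = 2 * du j - \<gamma> j * SX" .
  then have "e c0 * SX * \<gamma> j = 2 * (e c0 * du j) - \<gamma> j * (e c0 * SX)"
    by (simp add: mult.assoc right_diff_distrib ecomm2 mult_2 distrib_left)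
  then show ?thesis by (simp add: XX_SX)
qed

lemma d_xl: "i \<in> I \<Longrightarrow> d i * xl l = xl l * d i + e (etainv l i)"
proof -
  assume i: "i \<in> I"
  have "d i * xl l = (\<Sum>m\<in>I. e (etainv l m) * (x m * d i) + e (etainv l m) * e (if i = m then 1 else 0))"
    unfolding xlow_def sum_distrib_left
  proof (rule sum.cong[OF refl])
    fix m assume m: "m \<in> I"
    show "d i * (e (etainv l m) * x m) = e (etainv l m) * (x m * d i) + e (etainv l m) * e (if i = m then 1 else 0)"
      by (simp only: ecomm2 rDX[OF i m] distrib_left)
  qed
  also have "\<dots> = xl l * d i + e (etainv l i)"
    by (simp only: sum.distrib sum_delta_r'[OF i] xlow_def sum_distrib_right mult.assoc eone mult_1_right)
  finally show ?thesis .
qed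

lemma d_Y: "i \<in> I \<Longrightarrow> d i * YY = YY * d i + e c0 * gl i"
proof -
  assume i: "i \<in> I"
  have "d i * SY = (\<Sum>l\<in>I. \<gamma> l * xl l * d i + e (etainv i l) * \<gamma> l)"
    unfolding sum_distrib_left
  proof (rule sum.cong[OF refl])
    fix l assume l: "l \<in> I"
    have "d i * (\<gamma> l * xl l) = \<gamma> l * (d i * xl l)" by (simp add: rGD[OF l i] flip: mult.assoc)
    also have "\<dots> = \<gamma> l * xl l * d i + e (etainv i l) * \<gamma> l"
      by (simp add: d_xl[OF i] distrib_left mult.assoc isym[OF l i] ecomm)
    finally show "d i * (\<gamma> l * xl l) = \<gamma> l * xl l * d i + e (etainv i l) * \<gamma> l" .
  qed
  also have "\<dots> = SY * d i + gl i"
    by (simp add: sum.distrib sum_distrib_right glow_def)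
  finally have "d i * SY = SY * d i + gl i" .
  then show ?thesis by (simp add: YY_SY ecomm2 mult.assoc distrib_left)
qed

lemma g_xl: assumes i: "i \<in> I" shows "\<gamma> i * xl l = xl l * \<gamma> i"
  unfolding xlow_def by (rule lin_comm) (rule rGX[OF i])
lemma x_xl: assumes i: "i \<in> I" shows "x i * xl l = xl l * x i"
  unfolding xlow_def by (rule lin_comm) (rule rXX[OF i])

lemma sum_eta_xl: "i \<in> I \<Longrightarrow> (\<Sum>l\<in>I. e (eta i l) * xl l) = x i"
proof -
  assume i: "i \<in> I"
  have "(\<Sum>l\<in>I. e (eta i l) * xl l) = (\<Sum>l\<in>I. \<Sum>m\<in>I. e (eta i l * etainv l m) * x m)"
    unfolding xlow_def by (simp add: sum_distrib_left emul mult.assoc)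
  also have "\<dots> = (\<Sum>m\<in>I. \<Sum>l\<in>I. e (eta i l * etainv l m) * x m)" by (rule sum.swap)
  also have "\<dots> = (\<Sum>m\<in>I. e (if i = m then 1 else 0) * x m)"
  proof (rule sum.cong[OF refl])
    fix m assume m: "m \<in> I"
    show "(\<Sum>l\<in>I. e (eta i l * etainv l m) * x m) = e (if i = m then 1 else 0) * x m"
      by (simp only: sum_distrib_right[symmetric] esum[symmetric] rinvr[OF i m])
  qed
  also have "\<dots> = x i" by (simp only: sum_delta_l'[OF i] eone mult_1_left)
  finally show ?thesis .
qed

lemma g_Y: "i \<in> I \<Longrightarrow> \<gamma> i * YY = 2 * (e c0 * x i) - YY * \<gamma> i"
proof -
  assume i: "i \<in> I"
  have "\<gamma> i * SY = (\<Sum>l\<in>I. e 2 * (e (eta i l) * xl l) - \<gamma> l * xl l * \<gamma> i)"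
    unfolding sum_distrib_left
  proof (rule sum.cong[OF refl])
    fix l assume l: "l \<in> I"
    have gg: "\<gamma> i * \<gamma> l = e (2 * eta i l) - \<gamma> l * \<gamma> i"
      using rGG[OF i l] by (metis add_diff_cancel_right')
    have "\<gamma> i * (\<gamma> l * xl l) = (e (2 * eta i l) - \<gamma> l * \<gamma> i) * xl l"
      by (simp only: gg flip: mult.assoc)
    also have "\<dots> = e 2 * (e (eta i l) * xl l) - \<gamma> l * xl l * \<gamma> i"
      by (simp only: left_diff_distrib emul mult.assoc g_xl[OF i])
    finally show "\<gamma> i * (\<gamma> l * xl l) = e 2 * (e (eta i l) * xl l) - \<gamma> l * xl l * \<gamma> i" .
  qed
  also have "\<dots> = 2 * x i - SY * \<gamma> i"
    by (simp only: sum_subtractf sum_distrib_left[symmetric] sum_distrib_right[symmetric] sum_eta_xl[OF i] etwo)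
  finally have eq: "\<gamma> i * SY = 2 * x i - SY * \<gamma> i" .
  have "\<gamma> i * (e c0 * SY) = e c0 * (\<gamma> i * SY)" by (rule ecomm2)
  also have "\<dots> = 2 * (e c0 * x i) - (e c0 * SY) * \<gamma> i"
    by (simp only: eq right_diff_distrib mult_2 distrib_left distrib_right mult.assoc)
  finally show ?thesis by (simp add: YY_SY)
qed

lemma gl_Y: "gl i * YY = 2 * (e c0 * xl i) - YY * gl i"
proof -
  have "gl i * YY = (\<Sum>l\<in>I. e (etainv i l) * (\<gamma> l * YY))"
    by (simp add: glow_def sum_distrib_right mult.assoc)
  also have "\<dots> = (\<Sum>l\<in>I. 2 * (e c0 * (e (etainv i l) * x l)) - YY * (e (etainv i l) * \<gamma> l))"
  proof (rule sum.cong[OF refl])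
    fix l assume l: "l \<in> I"
    show "e (etainv i l) * (\<gamma> l * YY) = 2 * (e c0 * (e (etainv i l) * x l)) - YY * (e (etainv i l) * \<gamma> l)"
      by (simp only: g_Y[OF l] right_diff_distrib ecomm2[of YY] ecomm2[of "e c0"] mult_2 distrib_left)
  qed
  also have "\<dots> = 2 * (e c0 * xl i) - YY * gl i"
    by (simp add: sum_subtractf sum_distrib_left[symmetric] xlow_def glow_def)
  finally show ?thesis .
qed

lemma x_Y: "i \<in> I \<Longrightarrow> x i * YY = YY * x i"
proof -
  assume i: "i \<in> I"
  have "x i * SY = SY * x i"
  proof (rule sum_comm)
    fix l assume l: "l \<in> I"
    have "x i * (\<gamma> l * xl l) = \<gamma> l * (x i * xl l)" by (simp add: rGX[OF l i] flip: mult.assoc)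
    then show "x i * (\<gamma> l * xl l) = \<gamma> l * xl l * x i" by (simp add: x_xl[OF i] mult.assoc)
  qed
  then show ?thesis by (simp add: YY_SY ecomm2 mult.assoc)
qed
lemma xl_Y: "xl i * YY = YY * xl i"
proof -
  have "YY * xl i = xl i * YY"
    unfolding xlow_def by (rule lin_comm) (rule x_Y[symmetric])
  then show ?thesis by simp
qed

lemma ec0sq: "e c0 * (e c0 * z) = - (z * e (1/2))"
proof -
  have "e c0 * (e c0 * z) = e (c0 * c0) * z" by (simp add: emul mult.assoc)
  also have "\<dots> = - (e (1/2) * z)" by (simp add: c0sq eneg)
  finally show ?thesis by (simp add: ecomm)
qed
lemma ehalf2: "2 * (z * e (1/2)) = z"
proof -
  have "2 * (z * e (1/2)) = z * (e (1/2) * e 2)" by (simp add: etwo mult_2 mult_2_right distrib_left distrib_right)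
  also have "\<dots> = z" by (simp add: emul[symmetric] eone)
  finally show ?thesis .
qed

lemma X2_g: "j \<in> I \<Longrightarrow> XX * XX * \<gamma> j = \<gamma> j * XX * XX"
proof -
  assume j: "j \<in> I"
  have "XX * XX * \<gamma> j = XX * (2 * (e c0 * du j) - \<gamma> j * XX)" by (simp add: mult.assoc X_g[OF j])
  also have "\<dots> = 2 * (e c0 * (du j * XX)) - (XX * \<gamma> j) * XX"
    by (simp add: right_diff_distrib mult_2 distrib_left ecomm2 X_du mult.assoc)
  also have "\<dots> = \<gamma> j * XX * XX"
    by (simp add: X_g[OF j] left_diff_distrib mult_2 distrib_right mult.assoc)
  finally show ?thesis .
qed

lemma X2_x: "j \<in> I \<Longrightarrow> XX * XX * x j = x j * XX * XX - du j"
proof -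
  assume j: "j \<in> I"
  have "XX * XX * x j = XX * (x j * XX + e c0 * \<gamma> j)" by (simp add: mult.assoc X_x[OF j])
  also have "\<dots> = (XX * x j) * XX + e c0 * (XX * \<gamma> j)" by (simp add: distrib_left ecomm2 mult.assoc)
  also have "\<dots> = x j * XX * XX + e c0 * (\<gamma> j * XX) + e c0 * (2 * (e c0 * du j) - \<gamma> j * XX)"
    by (simp add: X_x[OF j] X_g[OF j] distrib_right mult.assoc)
  also have "\<dots> = x j * XX * XX + 2 * (e c0 * (e c0 * du j))"
    by (simp add: right_diff_distrib mult_2 distrib_left)
  also have "\<dots> = x j * XX * XX - du j" by (simp only: ec0sq mult_minus_right ehalf2 diff_conv_add_uminus)
  finally show ?thesis .
qed

lemma Xpow_comm: "XX * b = b * XX \<Longrightarrow> XX ^ k * b = b * XX ^ k"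
  by (induct k) (simp_all add: mult.assoc, metis mult.assoc)

lemma kappa1: "kappa n e g 1 = Hk 1"
  by (simp add: kappa_def Hk_def eone)
lemma kappa2: "kappa n e g 2 = - 1"
  by (simp add: kappa_def em1)
lemma rinv_m1: "rinv (- 1 :: 'r) = - 1"
  by (rule rinv_unique) (auto simp: is_unit_r_def intro: exI[of _ "- 1"])
lemma phi0: "PHI 0 = 1" by (simp add: phi_def)
lemma phi1: "PHI 1 = - rinv (Hk 1)"
  by (simp add: phi_def kappa1 em1 upt_rec)
lemma phi2: "PHI 2 = rinv (Hk 1)"
proof -
  have "[1..<Suc 2] = [1, 2]" by (simp add: upt_rec)
  then show ?thesis by (simp add: phi_def kappa1 kappa2 em1 eone rinv_m1)
qed

lemma DT_def: "DT a b k = a * PHI k * YY ^ k * XX ^ k * b" by (simp add: dterm_def)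
lemma DT0: "DT a b 0 = a * b" by (simp add: DT_def phi0)

lemma dia_fin:
  assumes "\<And>k. k \<ge> K \<Longrightarrow> DT a b k \<in> JJ"
  shows "DIA a b \<approx> (\<Sum>k<K. DT a b k)"
proof -
  define N where "N = (SOME N. \<forall>k\<ge>N. DT a b k \<in> JJ)"
  have "\<forall>k\<ge>N. DT a b k \<in> JJ" unfolding N_def by (rule someI[of _ K]) (use assms in auto)
  then have NN: "\<And>k. k \<ge> N \<Longrightarrow> DT a b k \<in> JJ" by blast
  have D: "DIA a b = (\<Sum>k<N. DT a b k)" by (simp add: dia_def N_def Let_def)
  show ?thesis
  proof (cases "N \<le> K")
    case True
    have "(\<Sum>k<K. DT a b k) = (\<Sum>k<N. DT a b k) + (\<Sum>k\<in>{N..<K}. DT a b k)"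
      using True by (simp add: lessThan_atLeast0 sum.atLeastLessThan_concat)
    moreover have "(\<Sum>k\<in>{N..<K}. DT a b k) \<in> JJ" by (rule II_sum) (simp add: NN)
    ultimately show ?thesis unfolding D eqv_def using II_neg by fastforce
  next
    case False
    have "(\<Sum>k<N. DT a b k) = (\<Sum>k<K. DT a b k) + (\<Sum>k\<in>{K..<N}. DT a b k)"
      using False by (simp add: lessThan_atLeast0 sum.atLeastLessThan_concat)
    moreover have "(\<Sum>k\<in>{K..<N}. DT a b k) \<in> JJ" by (rule II_sum) (simp add: assms)
    ultimately show ?thesis unfolding D eqv_def by simp
  qed
qed

lemma DTc: assumes c: "XX * b = b * XX" and k: "k \<ge> 1" shows "DT a b k \<in> JJ"
proof -
  obtain m where m: "k = Suc m" using k by (cases k) auto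
  have "DT a b k = a * PHI k * YY ^ k * (b * XX ^ k)" by (simp add: DT_def mult.assoc Xpow_comm[OF c])
  also have "\<dots> = (a * PHI k * YY ^ k * b * XX ^ m) * XX" by (simp add: m power_Suc2 mult.assoc del: power_Suc)
  finally show ?thesis by (simp add: II_X)
qed

lemma DTg: assumes j: "j \<in> I" and k: "k \<ge> 2" shows "DT a (\<gamma> j) k \<in> JJ"
proof -
  obtain m where m: "k = Suc (Suc m)" using k by (metis add_2_eq_Suc le_Suc_ex)
  have "DT a (\<gamma> j) k = a * PHI k * YY ^ k * XX ^ m * (XX * XX * \<gamma> j)" by (simp add: DT_def m power_Suc2 mult.assoc del: power_Suc)
  also have "\<dots> = (a * PHI k * YY ^ k * XX ^ m * \<gamma> j * XX) * XX" by (simp add: X2_g[OF j, unfolded mult.assoc] mult.assoc)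
  finally show ?thesis by (simp add: II_X)
qed

lemma DTx: assumes j: "j \<in> I" and k: "k \<ge> 3" shows "DT a (x j) k \<in> JJ"
proof -
  define m where "m = k - 3"
  have m: "k = Suc (Suc (Suc m))" using k unfolding m_def by arith
  have "DT a (x j) k = a * PHI k * YY ^ k * XX ^ m * XX * (XX * XX * x j)" by (simp add: DT_def m power_Suc2 mult.assoc del: power_Suc)
  also have "\<dots> = a * PHI k * YY ^ k * XX ^ m * (XX * x j * XX * XX - XX * du j)"
    by (simp add: X2_x[OF j, unfolded mult.assoc] right_diff_distrib mult.assoc)
  also have "\<dots> = (a * PHI k * YY ^ k * XX ^ m * (XX * x j * XX - du j)) * XX"
    by (simp add: X_du left_diff_distrib right_diff_distrib mult.assoc)
  finally show ?thesis by (simp add: II_X)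
qed

lemma DTg1: assumes j: "j \<in> I"
  shows "DT a (\<gamma> j) 1 \<approx> - (2 * (e c0 * (a * rinv (Hk 1) * YY * du j)))"
proof (rule eqv_X)
  show "DT a (\<gamma> j) 1 = - (2 * (e c0 * (a * rinv (Hk 1) * YY * du j))) + (a * rinv (Hk 1) * YY * \<gamma> j) * XX"
    by (simp add: DT_def phi1 mult.assoc X_g[OF j] right_diff_distrib mult_2 distrib_left ecomm2)
qed

lemma DTx1: assumes j: "j \<in> I"
  shows "DT a (x j) 1 \<approx> - (e c0 * (a * rinv (Hk 1) * YY * \<gamma> j))"
proof (rule eqv_X)
  show "DT a (x j) 1 = - (e c0 * (a * rinv (Hk 1) * YY * \<gamma> j)) + (- (a * rinv (Hk 1) * YY * x j)) * XX"
    by (simp add: DT_def phi1 mult.assoc X_x[OF j] distrib_left ecomm2)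
qed

lemma DTx2: assumes j: "j \<in> I"
  shows "DT a (x j) 2 \<approx> - (a * rinv (Hk 1) * YY * YY * du j)"
proof (rule eqv_X)
  show "DT a (x j) 2 = - (a * rinv (Hk 1) * YY * YY * du j) + (a * rinv (Hk 1) * YY * YY * x j * XX) * XX"
    by (simp add: DT_def phi2 mult.assoc power2_eq_square X2_x[OF j, unfolded mult.assoc] right_diff_distrib)
qed

lemma DiaC: "XX * b = b * XX \<Longrightarrow> DIA a b \<approx> a * b"
proof -
  assume c: "XX * b = b * XX"
  have "DIA a b \<approx> (\<Sum>k<1. DT a b k)" by (rule dia_fin) (rule DTc[OF c])
  then show ?thesis by (simp add: DT0)
qed

lemma DiaG: assumes j: "j \<in> I"
  shows "DIA a (\<gamma> j) \<approx> a * \<gamma> j - 2 * (e c0 * (a * rinv (Hk 1) * YY * du j))"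
proof -
  have "DIA a (\<gamma> j) \<approx> (\<Sum>k<2. DT a (\<gamma> j) k)" by (rule dia_fin) (rule DTg[OF j])
  also have "(\<Sum>k<2. DT a (\<gamma> j) k) = a * \<gamma> j + DT a (\<gamma> j) 1" by (simp add: numeral_2_eq_2 DT0 One_nat_def)
  finally have A: "DIA a (\<gamma> j) \<approx> a * \<gamma> j + DT a (\<gamma> j) 1" .
  have "a * \<gamma> j + DT a (\<gamma> j) 1 \<approx> a * \<gamma> j - 2 * (e c0 * (a * rinv (Hk 1) * YY * du j))"
    using eqv_add[OF eqv_refl DTg1[OF j]] by (simp only: diff_conv_add_uminus)
  from A this show ?thesis by (rule eqv_trans)
qed

lemma DiaX: assumes j: "j \<in> I"
  shows "DIA a (x j) \<approx> a * x j - e c0 * (a * rinv (Hk 1) * YY * \<gamma> j) - a * rinv (Hk 1) * YY * YY * du j"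
proof -
  have "DIA a (x j) \<approx> (\<Sum>k<3. DT a (x j) k)" by (rule dia_fin) (rule DTx[OF j])
  also have "(\<Sum>k<3. DT a (x j) k) = a * x j + DT a (x j) 1 + DT a (x j) 2"
    by (simp add: numeral_3_eq_3 numeral_2_eq_2 DT0 One_nat_def)
  finally have A: "DIA a (x j) \<approx> a * x j + DT a (x j) 1 + DT a (x j) 2" .
  have "a * x j + DT a (x j) 1 + DT a (x j) 2 \<approx> a * x j - e c0 * (a * rinv (Hk 1) * YY * \<gamma> j) - a * rinv (Hk 1) * YY * YY * du j"
    using eqv_add[OF eqv_add[OF eqv_refl DTx1[OF j]] DTx2[OF j]] by (simp only: diff_conv_add_uminus)
  from A this show ?thesis by (rule eqv_trans)
qed

lemma two_comm: "r * (2 * z) = 2 * (r * z :: 'r)" by (simp add: mult_2 distrib_left)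
lemma sqW: "2 * (e c0 * (e c0 * W)) = - W" by (simp only: ec0sq mult_minus_right ehalf2)
lemma II_2: "t \<in> JJ \<Longrightarrow> 2 * t \<in> JJ" by (simp add: mult_2 II_add)
lemma II_rY: "rinv (Hk k) * (YY * t) \<in> JJ" by (rule II_ri[OF II_Y])
lemma eqv_I: "P = Q + m \<Longrightarrow> m \<in> JJ \<Longrightarrow> P \<approx> Q" by (simp add: eqv_def)

lemma D_comm_g:
  assumes j: "j \<in> I" and h: "a * rinv (Hk 1) = rinv (Hk 1) * a" and aY: "a * YY = 2 * (e c0 * z) - YY * a"
  shows "DIA a (\<gamma> j) \<approx> a * \<gamma> j + 2 * (rinv (Hk 1) * (z * du j))"
proof -
  let ?r = "rinv (Hk 1)"
  have A: "DIA a (\<gamma> j) \<approx> a * \<gamma> j - 2 * (e c0 * (a * ?r * YY * du j))" by (rule DiaG[OF j])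
  have "a * ?r * YY * du j = (?r * a) * YY * du j" by (simp only: h)
  also have "\<dots> = ?r * ((a * YY) * du j)" by (simp only: mult.assoc)
  also have "\<dots> = ?r * ((2 * (e c0 * z) - YY * a) * du j)" by (simp only: aY)
  also have "\<dots> = 2 * (e c0 * (?r * (z * du j))) - ?r * (YY * (a * du j))"
    by (simp only: left_diff_distrib right_diff_distrib mult.assoc two_comm ecomm2[of ?r])
  finally have eq: "a * ?r * YY * du j = 2 * (e c0 * (?r * (z * du j))) - ?r * (YY * (a * du j))" .
  have "a * \<gamma> j - 2 * (e c0 * (a * ?r * YY * du j)) = (a * \<gamma> j + 2 * (?r * (z * du j))) + 2 * (e c0 * (?r * (YY * (a * du j))))"
    by (simp only: eq right_diff_distrib two_comm[of "e c0"] sqW) (simp add: algebra_simps)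
  moreover have "2 * (e c0 * (?r * (YY * (a * du j)))) \<in> JJ" by (intro II_2 II_e II_rY)
  ultimately have "a * \<gamma> j - 2 * (e c0 * (a * ?r * YY * du j)) \<approx> a * \<gamma> j + 2 * (?r * (z * du j))" by (rule eqv_I)
  with A show ?thesis by (rule eqv_trans)
qed

lemma d_r1: "i \<in> I \<Longrightarrow> d i * rinv (Hk 1) = rinv (Hk 0) * d i"
  using ri_d[of i 0] by simp
lemma x_r1: "i \<in> I \<Longrightarrow> x i * rinv (Hk 1) = rinv (Hk 2) * x i"
  using ri_x[of i 2] by simp

lemma D1: assumes i: "i \<in> I" and j: "j \<in> I"
  shows "DIA (d i) (\<gamma> j) \<approx> d i * \<gamma> j + rinv (Hk 0) * (gl i * du j)"
proof -
  let ?r = "rinv (Hk 1)"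
  let ?s = "rinv (Hk 0)"
  have A: "DIA (d i) (\<gamma> j) \<approx> d i * \<gamma> j - 2 * (e c0 * (d i * ?r * YY * du j))" by (rule DiaG[OF j])
  have "d i * ?r * YY * du j = ?s * ((d i * YY) * du j)" by (simp only: d_r1[OF i] mult.assoc)
  also have "\<dots> = ?s * ((YY * d i + e c0 * gl i) * du j)" by (simp only: d_Y[OF i])
  also have "\<dots> = ?s * (YY * (d i * du j)) + e c0 * (?s * (gl i * du j))"
    by (simp only: distrib_left distrib_right mult.assoc ecomm2[of ?s])
  finally have eq: "d i * ?r * YY * du j = ?s * (YY * (d i * du j)) + e c0 * (?s * (gl i * du j))" .
  have "d i * \<gamma> j - 2 * (e c0 * (d i * ?r * YY * du j)) = (d i * \<gamma> j + ?s * (gl i * du j)) + - (2 * (e c0 * (?s * (YY * (d i * du j)))))"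
    by (simp only: eq distrib_left sqW) (simp add: algebra_simps)
  moreover have "- (2 * (e c0 * (?s * (YY * (d i * du j))))) \<in> JJ" by (intro II_neg II_2 II_e II_rY)
  ultimately have "d i * \<gamma> j - 2 * (e c0 * (d i * ?r * YY * du j)) \<approx> d i * \<gamma> j + ?s * (gl i * du j)" by (rule eqv_I)
  with A show ?thesis by (rule eqv_trans)
qed

lemma D_x_g: assumes i: "i \<in> I" and j: "j \<in> I"
  shows "DIA (x i) (\<gamma> j) \<approx> x i * \<gamma> j"
proof -
  let ?r = "rinv (Hk 1)"
  have A: "DIA (x i) (\<gamma> j) \<approx> x i * \<gamma> j - 2 * (e c0 * (x i * ?r * YY * du j))" by (rule DiaG[OF j])
  have eq: "x i * ?r * YY * du j = rinv (Hk 2) * (YY * (x i * du j))"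
    by (simp only: x_r1[OF i] mult.assoc) (simp only: x_Y[OF i] flip: mult.assoc)
  have "x i * \<gamma> j - 2 * (e c0 * (x i * ?r * YY * du j)) = x i * \<gamma> j + - (2 * (e c0 * (rinv (Hk 2) * (YY * (x i * du j)))))"
    by (simp only: eq diff_conv_add_uminus)
  moreover have "- (2 * (e c0 * (rinv (Hk 2) * (YY * (x i * du j))))) \<in> JJ" by (intro II_neg II_2 II_e II_rY)
  ultimately have "x i * \<gamma> j - 2 * (e c0 * (x i * ?r * YY * du j)) \<approx> x i * \<gamma> j" by (rule eqv_I)
  with A show ?thesis by (rule eqv_trans)
qed

lemma D_comm_x:
  assumes j: "j \<in> I" and h: "a * rinv (Hk 1) = rinv (Hk 1) * a" and aY: "a * YY = 2 * (e c0 * z) - YY * a"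
    and zY: "z * YY = YY * z"
  shows "DIA a (x j) \<approx> a * x j + rinv (Hk 1) * (z * \<gamma> j)"
proof -
  let ?r = "rinv (Hk 1)"
  have A: "DIA a (x j) \<approx> a * x j - e c0 * (a * ?r * YY * \<gamma> j) - a * ?r * YY * YY * du j" by (rule DiaX[OF j])
  have "a * ?r * YY * \<gamma> j = ?r * ((a * YY) * \<gamma> j)" by (simp only: h mult.assoc)
  also have "\<dots> = ?r * ((2 * (e c0 * z) - YY * a) * \<gamma> j)" by (simp only: aY)
  also have "\<dots> = 2 * (e c0 * (?r * (z * \<gamma> j))) - ?r * (YY * (a * \<gamma> j))"
    by (simp only: left_diff_distrib right_diff_distrib mult.assoc two_comm ecomm2[of ?r])
  finally have eq1: "a * ?r * YY * \<gamma> j = 2 * (e c0 * (?r * (z * \<gamma> j))) - ?r * (YY * (a * \<gamma> j))" .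
  have "a * ?r * YY * YY * du j = ?r * ((a * YY) * (YY * du j))" by (simp only: h mult.assoc)
  also have "\<dots> = ?r * ((2 * (e c0 * z) - YY * a) * (YY * du j))" by (simp only: aY)
  also have "\<dots> = 2 * (e c0 * (?r * ((z * YY) * du j))) - ?r * (YY * (a * (YY * du j)))"
    by (simp only: left_diff_distrib right_diff_distrib mult.assoc two_comm ecomm2[of ?r])
  also have "\<dots> = 2 * (e c0 * (?r * (YY * (z * du j)))) - ?r * (YY * (a * (YY * du j)))"
    by (simp only: zY mult.assoc)
  finally have eq2: "a * ?r * YY * YY * du j = 2 * (e c0 * (?r * (YY * (z * du j)))) - ?r * (YY * (a * (YY * du j)))" .
  have "a * x j - e c0 * (a * ?r * YY * \<gamma> j) - a * ?r * YY * YY * du j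
     = (a * x j + ?r * (z * \<gamma> j)) + (e c0 * (?r * (YY * (a * \<gamma> j))) - 2 * (e c0 * (?r * (YY * (z * du j)))) + ?r * (YY * (a * (YY * du j))))"
    by (simp only: eq1 eq2 right_diff_distrib two_comm[of "e c0"] sqW) (simp add: algebra_simps)
  moreover have "e c0 * (?r * (YY * (a * \<gamma> j))) - 2 * (e c0 * (?r * (YY * (z * du j)))) + ?r * (YY * (a * (YY * du j))) \<in> JJ"
    by (intro II_add II_diff II_2 II_e II_rY)
  ultimately have "a * x j - e c0 * (a * ?r * YY * \<gamma> j) - a * ?r * YY * YY * du j \<approx> a * x j + ?r * (z * \<gamma> j)" by (rule eqv_I)
  with A show ?thesis by (rule eqv_trans)
qed

lemma D6: assumes i: "i \<in> I" and j: "j \<in> I"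
  shows "DIA (d i) (x j) \<approx> d i * x j + e (1/2) * (rinv (Hk 0) * (gl i * \<gamma> j)) + rinv (Hk 0) * (xl i * du j)"
proof -
  let ?r = "rinv (Hk 1)"
  let ?s = "rinv (Hk 0)"
  have A: "DIA (d i) (x j) \<approx> d i * x j - e c0 * (d i * ?r * YY * \<gamma> j) - d i * ?r * YY * YY * du j" by (rule DiaX[OF j])
  have "d i * ?r * YY * \<gamma> j = ?s * ((d i * YY) * \<gamma> j)" by (simp only: d_r1[OF i] mult.assoc)
  also have "\<dots> = ?s * ((YY * d i + e c0 * gl i) * \<gamma> j)" by (simp only: d_Y[OF i])
  also have "\<dots> = ?s * (YY * (d i * \<gamma> j)) + e c0 * (?s * (gl i * \<gamma> j))"
    by (simp only: distrib_left distrib_right mult.assoc ecomm2[of ?s])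
  finally have eq1: "d i * ?r * YY * \<gamma> j = ?s * (YY * (d i * \<gamma> j)) + e c0 * (?s * (gl i * \<gamma> j))" .
  have "d i * ?r * YY * YY * du j = ?s * ((d i * YY) * (YY * du j))" by (simp only: d_r1[OF i] mult.assoc)
  also have "\<dots> = ?s * ((YY * d i + e c0 * gl i) * (YY * du j))" by (simp only: d_Y[OF i])
  also have "\<dots> = ?s * (YY * (d i * (YY * du j))) + e c0 * (?s * ((gl i * YY) * du j))"
    by (simp only: distrib_left distrib_right mult.assoc ecomm2[of ?s])
  also have "\<dots> = ?s * (YY * (d i * (YY * du j))) + e c0 * (?s * ((2 * (e c0 * xl i) - YY * gl i) * du j))"
    by (simp only: gl_Y)
  also have "\<dots> = ?s * (YY * (d i * (YY * du j))) + (2 * (e c0 * (e c0 * (?s * (xl i * du j)))) - e c0 * (?s * (YY * (gl i * du j))))"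
    by (simp only: left_diff_distrib right_diff_distrib mult.assoc two_comm ecomm2[of ?s])
  finally have eq2: "d i * ?r * YY * YY * du j = ?s * (YY * (d i * (YY * du j))) + (- (?s * (xl i * du j)) - e c0 * (?s * (YY * (gl i * du j))))"
    by (simp only: sqW)
  have "d i * x j - e c0 * (d i * ?r * YY * \<gamma> j) - d i * ?r * YY * YY * du j
     = (d i * x j + e (1/2) * (?s * (gl i * \<gamma> j)) + ?s * (xl i * du j)) + (e c0 * (?s * (YY * (gl i * du j))) - e c0 * (?s * (YY * (d i * \<gamma> j))) - ?s * (YY * (d i * (YY * du j))))"
    by (simp only: eq1 eq2 distrib_left ec0sq ecomm[of "1/2"]) (simp add: algebra_simps)
  moreover have "e c0 * (?s * (YY * (gl i * du j))) - e c0 * (?s * (YY * (d i * \<gamma> j))) - ?s * (YY * (d i * (YY * du j))) \<in> JJ"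
    by (intro II_diff II_e II_rY)
  ultimately have "d i * x j - e c0 * (d i * ?r * YY * \<gamma> j) - d i * ?r * YY * YY * du j
     \<approx> d i * x j + e (1/2) * (?s * (gl i * \<gamma> j)) + ?s * (xl i * du j)" by (rule eqv_I)
  with A show ?thesis by (rule eqv_trans)
qed

lemma g_r1: "i \<in> I \<Longrightarrow> \<gamma> i * rinv (Hk 1) = rinv (Hk 1) * \<gamma> i" using ri_g[of i 1] by simp
lemma gl_r1: "gl i * rinv (Hk 1) = rinv (Hk 1) * gl i" using ri_gl[of 1 i] by simp

lemma eqv_mem: "P \<approx> T \<Longrightarrow> T \<in> JJ \<Longrightarrow> P \<in> JJ"
  unfolding eqv_def using II_add[of "P - T" T] by simp
lemma eqv_zero: "P \<approx> T \<Longrightarrow> T = 0 \<Longrightarrow> P \<in> JJ" by (simp add: eqv_def)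

lemma rel1: assumes i: "i \<in> I" and j: "j \<in> I"
  shows "DIA (d i) (\<gamma> j) - DIA (\<gamma> j) (d i) - rinv (Hk 0) * DIA (gl i) (du j) \<in> JJ"
proof (rule eqv_zero)
  show "DIA (d i) (\<gamma> j) - DIA (\<gamma> j) (d i) - rinv (Hk 0) * DIA (gl i) (du j) \<approx>
     (d i * \<gamma> j + rinv (Hk 0) * (gl i * du j)) - \<gamma> j * d i - rinv (Hk 0) * (gl i * du j)"
    by (intro eqv_diff D1[OF i j] DiaC X_d[OF i] eqv_ri X_du)
  show "(d i * \<gamma> j + rinv (Hk 0) * (gl i * du j)) - \<gamma> j * d i - rinv (Hk 0) * (gl i * du j) = 0"
    by (simp add: rGD[OF j i])
qed

lemma rel2: assumes i: "i \<in> I" and j: "j \<in> I"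
  shows "DIA (\<gamma> i) (\<gamma> j) + DIA (\<gamma> j) (\<gamma> i) - (e (2 * eta i j) + e 2 * rinv (Hk 1) * (DIA (x j) (du i) + DIA (x i) (du j))) \<in> JJ"
proof (rule eqv_zero)
  show "DIA (\<gamma> i) (\<gamma> j) + DIA (\<gamma> j) (\<gamma> i) - (e (2 * eta i j) + e 2 * rinv (Hk 1) * (DIA (x j) (du i) + DIA (x i) (du j))) \<approx>
    (\<gamma> i * \<gamma> j + 2 * (rinv (Hk 1) * (x i * du j))) + (\<gamma> j * \<gamma> i + 2 * (rinv (Hk 1) * (x j * du i)))
     - (e (2 * eta i j) + e 2 * (rinv (Hk 1) * (x j * du i + x i * du j)))"
    unfolding mult.assoc[of "e 2"]
    by (intro eqv_diff eqv_add eqv_refl eqv_e eqv_ri D_comm_g[OF j g_r1[OF i] g_Y[OF i]] D_comm_g[OF i g_r1[OF j] g_Y[OF j]] DiaC X_du)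
  have gg: "\<gamma> i * \<gamma> j + \<gamma> j * \<gamma> i = e (2 * eta i j)" by (rule rGG[OF i j])
  show "(\<gamma> i * \<gamma> j + 2 * (rinv (Hk 1) * (x i * du j))) + (\<gamma> j * \<gamma> i + 2 * (rinv (Hk 1) * (x j * du i)))
     - (e (2 * eta i j) + e 2 * (rinv (Hk 1) * (x j * du i + x i * du j))) = 0"
    by (simp add: gg[symmetric] etwo distrib_left algebra_simps)
qed

lemma rr: "rinv (Hk 0) * rinv (Hk 1) + rinv (Hk 1) = rinv (Hk 0)"
proof -
  have u0: "rinv (Hk 0) * Hk 0 = 1" using rinv_props[OF Hk_unit] by blast
  have u1: "Hk 1 * rinv (Hk 1) = 1" using rinv_props[OF Hk_unit] by blast
  have h: "Hk 1 = Hk 0 + 1" by (simp add: Hk_def)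
  have "rinv (Hk 0) = rinv (Hk 0) * (Hk 1 * rinv (Hk 1))" by (simp add: u1)
  also have "\<dots> = (rinv (Hk 0) * Hk 0) * rinv (Hk 1) + rinv (Hk 0) * rinv (Hk 1)"
    by (simp add: h distrib_left distrib_right mult.assoc)
  also have "\<dots> = rinv (Hk 0) * rinv (Hk 1) + rinv (Hk 1)" by (simp add: u0)
  finally show ?thesis by simp
qed

lemma rel3: assumes i: "i \<in> I" and j: "j \<in> I"
  shows "DIA (d i) (x j) - DIA (x j) (d i) - (e (if i = j then 1 else 0) + e (1/2) * rinv (Hk 0) * DIA (gl i) (\<gamma> j) + rinv (Hk 1) * DIA (xl i) (du j)) \<in> JJ"
proof (rule eqv_zero)
  show "DIA (d i) (x j) - DIA (x j) (d i) - (e (if i = j then 1 else 0) + e (1/2) * rinv (Hk 0) * DIA (gl i) (\<gamma> j) + rinv (Hk 1) * DIA (xl i) (du j)) \<approx>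
    (d i * x j + e (1/2) * (rinv (Hk 0) * (gl i * \<gamma> j)) + rinv (Hk 0) * (xl i * du j)) - x j * d i
    - (e (if i = j then 1 else 0) + e (1/2) * (rinv (Hk 0) * (gl i * \<gamma> j + 2 * (rinv (Hk 1) * (xl i * du j)))) + rinv (Hk 1) * (xl i * du j))"
    unfolding mult.assoc[of "e (1/2)"]
    by (intro eqv_diff eqv_add eqv_refl eqv_e eqv_ri D6[OF i j] D_comm_g[OF j gl_r1 gl_Y] DiaC X_d[OF i] X_du)
  have dx: "d i * x j - x j * d i = e (if i = j then 1 else 0)" using rDX[OF i j] by simp
  have h2: "e (1/2) * (rinv (Hk 0) * (2 * W)) = rinv (Hk 0) * W" for W
  proof -
    have "e (1/2) * (2 * W) = W" by (simp add: etwo[symmetric] emul2 eone)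
    then show ?thesis by (simp add: ecomm2[symmetric])
  qed
  have r3: "rinv (Hk 0) * W = rinv (Hk 0) * (rinv (Hk 1) * W) + rinv (Hk 1) * W" for W
    by (simp add: mult.assoc[symmetric] distrib_right[symmetric] rr)
  show "(d i * x j + e (1/2) * (rinv (Hk 0) * (gl i * \<gamma> j)) + rinv (Hk 0) * (xl i * du j)) - x j * d i
    - (e (if i = j then 1 else 0) + e (1/2) * (rinv (Hk 0) * (gl i * \<gamma> j + 2 * (rinv (Hk 1) * (xl i * du j)))) + rinv (Hk 1) * (xl i * du j)) = 0"
    using dx by (simp add: distrib_left h2 r3[of "xl i * du j"] algebra_simps)
qed

lemma rel4: assumes i: "i \<in> I" and j: "j \<in> I"
  shows "DIA (\<gamma> i) (x j) - DIA (x j) (\<gamma> i) - rinv (Hk 1) * DIA (x i) (\<gamma> j) \<in> JJ"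
proof (rule eqv_zero)
  show "DIA (\<gamma> i) (x j) - DIA (x j) (\<gamma> i) - rinv (Hk 1) * DIA (x i) (\<gamma> j) \<approx>
     (\<gamma> i * x j + rinv (Hk 1) * (x i * \<gamma> j)) - x j * \<gamma> i - rinv (Hk 1) * (x i * \<gamma> j)"
    by (intro eqv_diff eqv_ri D_comm_x[OF j g_r1[OF i] g_Y[OF i] x_Y[OF i]] D_x_g[OF j i] D_x_g[OF i j])
  show "(\<gamma> i * x j + rinv (Hk 1) * (x i * \<gamma> j)) - x j * \<gamma> i - rinv (Hk 1) * (x i * \<gamma> j) = 0"
    by (simp add: rGX[OF i j])
qed

lemma sum_xd: "(\<Sum>k\<in>I. x k * d k) = e (- of_nat n / 2) - HH"
proof -
  have "(\<Sum>k\<in>I. d k * x k + x k * d k) = (\<Sum>k\<in>I. 2 * (x k * d k) + 1)"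
  proof (rule sum.cong[OF refl])
    fix k assume k: "k \<in> I"
    show "d k * x k + x k * d k = 2 * (x k * d k) + 1" using rDX[OF k k] by (simp add: eone mult_2)
  qed
  also have "\<dots> = 2 * (\<Sum>k\<in>I. x k * d k) + of_nat n" by (simp add: sum.distrib sum_distrib_left)
  finally have S: "(\<Sum>k\<in>I. d k * x k + x k * d k) = 2 * (\<Sum>k\<in>I. x k * d k) + of_nat n" .
  have "HH = e (-1/2) * (2 * (\<Sum>k\<in>I. x k * d k)) + e (-1/2) * of_nat n"
    by (simp add: Ho_def S distrib_left)
  also have "\<dots> = - (\<Sum>k\<in>I. x k * d k) + e (- of_nat n / 2)"
    by (simp add: etwo[symmetric] emul2 eone em1 enat[symmetric] emul[symmetric])
  finally show ?thesis by (simp add: algebra_simps)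
qed

lemma rel5: "(\<Sum>k\<in>I. DIA (x k) (d k)) - (e (- of_nat n / 2) - HH) \<in> JJ"
proof (rule eqv_zero)
  show "(\<Sum>k\<in>I. DIA (x k) (d k)) - (e (- of_nat n / 2) - HH) \<approx> (\<Sum>k\<in>I. x k * d k) - (e (- of_nat n / 2) - HH)"
    by (intro eqv_diff eqv_refl eqv_sum DiaC X_d)
  show "(\<Sum>k\<in>I. x k * d k) - (e (- of_nat n / 2) - HH) = 0" by (simp add: sum_xd)
qed

lemma SX_II: "SX \<in> JJ"
proof -
  have "SX = e (1 / c0) * XX" by (simp add: XX_SX emul2 c0nz eone)
  then show ?thesis by (simp add: II_X)
qed
lemma SY_II: "SY \<in> JJ"
proof -
  have "SY = YY * e (1 / c0)" by (simp add: YY_SY emul2 c0nz eone flip: ecomm)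
  then show ?thesis by (simp add: II_Y)
qed

lemma rel6: "(\<Sum>k\<in>I. DIA (\<gamma> k) (d k)) \<in> JJ"
proof (rule eqv_mem)
  show "(\<Sum>k\<in>I. DIA (\<gamma> k) (d k)) \<approx> SX" by (intro eqv_sum DiaC X_d)
qed (rule SX_II)

lemma sum_glx: "(\<Sum>k\<in>I. gl k * x k) = SY"
proof -
  have "(\<Sum>k\<in>I. gl k * x k) = (\<Sum>k\<in>I. \<Sum>l\<in>I. e (etainv k l) * (\<gamma> l * x k))"
    by (simp add: glow_def sum_distrib_right mult.assoc)
  also have "\<dots> = (\<Sum>l\<in>I. \<Sum>k\<in>I. e (etainv k l) * (\<gamma> l * x k))" by (rule sum.swap)
  also have "\<dots> = (\<Sum>l\<in>I. \<Sum>k\<in>I. \<gamma> l * (e (etainv l k) * x k))"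
    by (intro sum.cong refl) (simp add: ecomm2 isym)
  also have "\<dots> = SY" by (simp add: xlow_def sum_distrib_left)
  finally show ?thesis .
qed

lemma rel7: "(\<Sum>k\<in>I. DIA (gl k) (x k)) \<in> JJ"
proof (rule eqv_mem)
  show "(\<Sum>k\<in>I. DIA (gl k) (x k)) \<approx> (\<Sum>k\<in>I. gl k * x k + rinv (Hk 1) * (xl k * \<gamma> k))"
    by (intro eqv_sum D_comm_x gl_r1 gl_Y xl_Y)
  have "(\<Sum>k\<in>I. gl k * x k + rinv (Hk 1) * (xl k * \<gamma> k)) = SY + rinv (Hk 1) * SY"
    by (simp add: sum.distrib sum_glx sum_distrib_left g_xl)
  then show "(\<Sum>k\<in>I. gl k * x k + rinv (Hk 1) * (xl k * \<gamma> k)) \<in> JJ"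
    by (simp add: II_add II_ri SY_II)
qed

end

theorem theorem4p2:
  fixes n :: nat and eta etainv :: "nat \<Rightarrow> nat \<Rightarrow> complex"
    and e :: "complex \<Rightarrow> 'r::ring_1" and g :: "gen \<Rightarrow> 'r"
    and i j :: nat
  assumes "n \<ge> 1"
    and "\<forall>a\<in>{1..n}. \<forall>b\<in>{1..n}. eta a b = eta b a"
    and "\<forall>a\<in>{1..n}. \<forall>c\<in>{1..n}. (\<Sum>b\<in>{1..n}. eta a b * etainv b c) = (if a = c then 1 else 0)"
    and "is_localization n eta e g"
    and "i \<in> {1..n}" and "j \<in> {1..n}"
  shows
   "dia n eta etainv e g (dlow g i) (gup g j) - dia n eta etainv e g (gup g j) (dlow g i)
      - rinv (Ho n e g) * dia n eta etainv e g (glow n etainv e g i) (dup n eta e g j)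
      \<in> II n eta etainv e g
  \<and> dia n eta etainv e g (gup g i) (gup g j) + dia n eta etainv e g (gup g j) (gup g i)
      - (e (2 * eta i j) + e 2 * rinv (Ho n e g + 1) *
          (dia n eta etainv e g (xup g j) (dup n eta e g i)
           + dia n eta etainv e g (xup g i) (dup n eta e g j)))
      \<in> II n eta etainv e g
  \<and> dia n eta etainv e g (dlow g i) (xup g j) - dia n eta etainv e g (xup g j) (dlow g i)
      - (e (if i = j then 1 else 0)
         + e (1/2) * rinv (Ho n e g) * dia n eta etainv e g (glow n etainv e g i) (gup g j)
         + rinv (Ho n e g + 1) * dia n eta etainv e g (xlow n etainv e g i) (dup n eta e g j))
      \<in> II n eta etainv e g
  \<and> dia n eta etainv e g (gup g i) (xup g j) - dia n eta etainv e g (xup g j) (gup g i)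
      - rinv (Ho n e g + 1) * dia n eta etainv e g (xup g i) (gup g j)
      \<in> II n eta etainv e g
  \<and> (\<Sum>k\<in>{1..n}. dia n eta etainv e g (xup g k) (dlow g k))
      - (e (- of_nat n / 2) - Ho n e g)
      \<in> II n eta etainv e g
  \<and> (\<Sum>k\<in>{1..n}. dia n eta etainv e g (gup g k) (dlow g k)) \<in> II n eta etainv e g
  \<and> (\<Sum>k\<in>{1..n}. dia n eta etainv e g (glow n etainv e g k) (xup g k)) \<in> II n eta etainv e g"
proof -
  note L = assms(4)
  interpret W: walg n eta etainv e g
  proof (unfold_locales)
    show "\<And>a b. e (a + b) = e a + e b" by (rule ehom.eadd[OF loc_ehom[OF L]])
    show "\<And>a b. e (a * b) = e a * e b" by (rule ehom.emul[OF loc_ehom[OF L]])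
    show "e 1 = 1" by (rule ehom.eone[OF loc_ehom[OF L]])
    show "\<And>c r. e c * r = r * e c" using L unfolding is_localization_def by blast
    show "\<And>a b. a \<in> {1..n} \<Longrightarrow> b \<in> {1..n} \<Longrightarrow> eta a b = eta b a" using assms(2) by blast
    show "\<And>a b. a \<in> {1..n} \<Longrightarrow> b \<in> {1..n} \<Longrightarrow> etainv a b = etainv b a"
      using etainv_sym[OF assms(2) assms(3)] by blast
    show "\<And>a c. a \<in> {1..n} \<Longrightarrow> c \<in> {1..n} \<Longrightarrow>
        (\<Sum>b\<in>{1..n}. eta a b * etainv b c) = (if a = c then 1 else 0)" using assms(3) by blast
    show "\<And>i j. i \<in> {1..n} \<Longrightarrow> j \<in> {1..n} \<Longrightarrow> xup g i * xup g j = xup g j * xup g i"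
      by (rule loc_rels(1)[OF L])
    show "\<And>i j. i \<in> {1..n} \<Longrightarrow> j \<in> {1..n} \<Longrightarrow> dlow g i * dlow g j = dlow g j * dlow g i"
      by (rule loc_rels(2)[OF L])
    show "\<And>i j. i \<in> {1..n} \<Longrightarrow> j \<in> {1..n} \<Longrightarrow>
        dlow g i * xup g j = xup g j * dlow g i + e (if i = j then 1 else 0)"
      by (rule loc_rels(3)[OF L])
    show "\<And>i j. i \<in> {1..n} \<Longrightarrow> j \<in> {1..n} \<Longrightarrow> gup g i * xup g j = xup g j * gup g i"
      by (rule loc_rels(4)[OF L])
    show "\<And>i j. i \<in> {1..n} \<Longrightarrow> j \<in> {1..n} \<Longrightarrow> gup g i * dlow g j = dlow g j * gup g i"
      by (rule loc_rels(5)[OF L])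
    show "\<And>i j. i \<in> {1..n} \<Longrightarrow> j \<in> {1..n} \<Longrightarrow>
        gup g i * gup g j + gup g j * gup g i = e (2 * eta i j)"
      by (rule loc_rels(6)[OF L])
    show "\<And>k. is_unit_r (Ho n e g + e (of_int k))" by (rule loc_units[OF L])
  qed
  note i = assms(5) and j = assms(6)
  show ?thesis
    apply (intro conjI)
    apply (rule W.rel1[OF i j, unfolded W.Hk0])
    apply (rule W.rel2[OF i j, unfolded W.Hk1])
    apply (rule W.rel3[OF i j, unfolded W.Hk0 W.Hk1])
    apply (rule W.rel4[OF i j, unfolded W.Hk1])
    apply (rule W.rel5)
    apply (rule W.rel6)
    apply (rule W.rel7)
    done
qed

end
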